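(* For any two symmetric scoring functions $S,T$, there exists a deterministic compact convex set $\mathrm{SET}_{S,T}\subset\mathbb{R}^2$ such that $d_H(\mathrm{SET}^n_{S,T},\mathrm{SET}_{S,T})\to0$ almost surely as $n\to\infty$; moreover, for every $(a,b)\in\mathbb{R}^2$, $\max_{(x,y)\in\mathrm{SET}^n_{S,T}}(ax+by)=L_{n,aS+bT}/n\to\lambda_{aS+bT}$ almost surely.
   Context: $\mathcal{A}$ finite alphabet, $\mathcal{A}^*=\mathcal{A}\cup\{G\}$ with gap symbol $G$. A symmetric scoring function is $R:\mathcal{A}^*\times\mathcal{A}^*\to\mathbb{R}$ with $R(a,b)=R(b,a)$, $R(G,G)=0$. An alignment of $x_{[1,n]},y_{[1,n]}$ is a pair of increasing sequences $1\le i_1<\dots<i_k\le n$, $1\le j_1<\dots<j_k\le n$; $\Lambda_n$ is the set of them; its score is $R_\nu(x_{[1,n]},y_{[1,n]})=\sum_{\ell}R(x_{i_\ell},y_{j_\ell})+\sum_{i\notin\{i_\ell\}}R(x_i,G)+\sum_{j\notin\{j_\ell\}}R(G,y_j)$. $X_1,X_2,\dots,Y_1,Y_2,\dots$ are i.i.d. random letters from a fixed distribution on $\mathcal{A}$; $L_{n,R}=\max_{\nu\in\Lambda_n}R_\nu(X_{[1,n]},Y_{[1,n]})$; $\lambda_R$ is the deterministic a.s. limit of $L_{n,R}/n$. $\mathrm{SET}^n_{S,T}$ is the closed convex hull of $\{(S_\nu(X_{[1,n]},Y_{[1,n]})/n,\,T_\nu(X_{[1,n]},Y_{[1,n]})/n):\nu\in\Lambda_n\}$.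 $d_H$ is the Hausdorff distance with respect to the Euclidean metric. *)

theory Defs
  imports "HOL-Probability.Probability"
begin

text \<open>Letters of the extended alphabet: \<open>Some a\<close> is the letter a, \<open>None\<close> is the gap symbol G.\<close>

definition symmetric_scoring :: "('a option \<Rightarrow> 'a option \<Rightarrow> real) \<Rightarrow> bool" where
  "symmetric_scoring R \<longleftrightarrow> (\<forall>u v. R u v = R v u) \<and> R None None = 0"

definition alignments :: "nat \<Rightarrow> (nat list \<times> nat list) set" where
  "alignments n = {(is, js). length is = length js \<and> sorted_wrt (<) is \<and> sorted_wrt (<) js
      \<and> set is \<subseteq> {1..n} \<and> set js \<subseteq> {1..n}}"

definition align_score ::
  "('a option \<Rightarrow> 'a option \<Rightarrow> real) \<Rightarrow> nat \<Rightarrow> (nat \<Rightarrow> 'a) \<Rightarrow> (nat \<Rightarrow> 'a) \<Rightarrow> nat list \<times> nat list \<Rightarrow> real" where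
  "align_score R n x y \<nu> = (case \<nu> of (is, js) \<Rightarrow>
      (\<Sum>l<length is. R (Some (x (is ! l))) (Some (y (js ! l))))
      + (\<Sum>i\<in>{1..n} - set is. R (Some (x i)) None)
      + (\<Sum>j\<in>{1..n} - set js. R None (Some (y j))))"

definition opt_score ::
  "('a option \<Rightarrow> 'a option \<Rightarrow> real) \<Rightarrow> nat \<Rightarrow> (nat \<Rightarrow> 'a) \<Rightarrow> (nat \<Rightarrow> 'a) \<Rightarrow> real" where
  "opt_score R n x y = Max (align_score R n x y ` alignments n)"

definition score_set ::
  "('a option \<Rightarrow> 'a option \<Rightarrow> real) \<Rightarrow> ('a option \<Rightarrow> 'a option \<Rightarrow> real)
     \<Rightarrow> nat \<Rightarrow> (nat \<Rightarrow> 'a) \<Rightarrow> (nat \<Rightarrow> 'a) \<Rightarrow> (real \<times> real) set" where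
  "score_set S T n x y = closure (convex hull
      ((\<lambda>\<nu>. (align_score S n x y \<nu> / real n, align_score T n x y \<nu> / real n)) ` alignments n))"

text \<open>Hausdorff distance w.r.t. the Euclidean metric (used for nonempty bounded sets).\<close>
definition hausdist :: "'a::metric_space set \<Rightarrow> 'a set \<Rightarrow> real" where
  "hausdist A B = max (SUP x\<in>A. infdist x B) (SUP y\<in>B. infdist y A)"

definition lcs_const ::
  "'w measure \<Rightarrow> (nat \<Rightarrow> 'w \<Rightarrow> 'a) \<Rightarrow> (nat \<Rightarrow> 'w \<Rightarrow> 'a) \<Rightarrow> ('a option \<Rightarrow> 'a option \<Rightarrow> real) \<Rightarrow> real" where
  "lcs_const M X Y R =
     (THE l. AE w in M. (\<lambda>n. opt_score R n (\<lambda>i. X i w) (\<lambda>j. Y j w) / real n) \<longlonglongrightarrow> l)"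

end

theory Submission
  imports Defs "HOL-Real_Asymp.Real_Asymp"
begin

lemma sorted_less_distinct: "sorted_wrt (<) (xs::nat list) \<Longrightarrow> distinct xs"
  using strict_sorted_iff by blast

lemma align_len: assumes "(is,js) \<in> alignments n" shows "length is \<le> n" "length js \<le> n"
proof -
  have d: "distinct is" "distinct js" using assms by (auto simp: alignments_def strict_sorted_iff)
  have "length is = card (set is)" using d distinct_card by metis
  also have "\<dots> \<le> card {1..n}" using assms by (intro card_mono) (auto simp: alignments_def)
  finally show "length is \<le> n" by simp
  have "length js = card (set js)" using d distinct_card by metis
  also have "\<dots> \<le> card {1..n}" using assms by (intro card_mono) (auto simp: alignments_def)
  finally show "length js \<le> n" by simp
qed

lemma alignments_finite: "finite (alignments n)"
proof -
  have "alignments n \<subseteq> {xs. set xs \<subseteq> {1..n} \<and> length xs \<le> n} \<times> {xs. set xs \<subseteq> {1..n} \<and> length xs \<le> n}"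
    using align_len by (force simp: alignments_def)
  moreover have "finite ({xs. set xs \<subseteq> {1..n} \<and> length xs \<le> n} \<times> {xs. set xs \<subseteq> {1..n} \<and> length xs \<le> n})"
    by (intro finite_cartesian_product finite_lists_length_le) auto
  ultimately show ?thesis by (rule finite_subset)
qed

lemma alignments_nil: "([],[]) \<in> alignments n"
  by (simp add: alignments_def)

lemma alignments_ne: "alignments n \<noteq> {}"
  using alignments_nil by blast

lemma align_score_bound:
  assumes C: "\<And>u v. \<bar>R u v\<bar> \<le> C" and nu: "\<nu> \<in> alignments n"
  shows "\<bar>align_score R n x y \<nu>\<bar> \<le> 3 * real n * C"
proof -
  obtain "is" js where nu': "\<nu> = (is,js)" by (cases \<nu>)
  have C0: "0 \<le> C" using C[of None None] by simp
  have l: "length is \<le> n" using align_len nu nu' by auto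
  have "\<bar>\<Sum>l<length is. R (Some (x (is ! l))) (Some (y (js ! l)))\<bar> \<le> (\<Sum>l<length is. C)"
    by (rule order_trans[OF sum_abs]) (intro sum_mono C)
  also have "\<dots> \<le> real n * C" using l C0 by (simp add: mult_right_mono)
  finally have 1: "\<bar>\<Sum>l<length is. R (Some (x (is ! l))) (Some (y (js ! l)))\<bar> \<le> real n * C" .
  have "\<bar>\<Sum>i\<in>{1..n} - set is. R (Some (x i)) None\<bar> \<le> (\<Sum>i\<in>{1..n} - set is. C)"
    by (rule order_trans[OF sum_abs]) (intro sum_mono C)
  also have "\<dots> = real (card ({1..n} - set is)) * C" by simp
  also have "\<dots> \<le> real n * C"
  proof -
    have "card ({1..n} - set is) \<le> card {1..n::nat}" by (intro card_mono) auto
    thus ?thesis using C0 by (simp add: mult_right_mono)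
  qed
  finally have 2: "\<bar>\<Sum>i\<in>{1..n} - set is. R (Some (x i)) None\<bar> \<le> real n * C" .
  have "\<bar>\<Sum>j\<in>{1..n} - set js. R None (Some (y j))\<bar> \<le> (\<Sum>j\<in>{1..n} - set js. C)"
    by (rule order_trans[OF sum_abs]) (intro sum_mono C)
  also have "\<dots> = real (card ({1..n} - set js)) * C" by simp
  also have "\<dots> \<le> real n * C"
  proof -
    have "card ({1..n} - set js) \<le> card {1..n::nat}" by (intro card_mono) auto
    thus ?thesis using C0 by (simp add: mult_right_mono)
  qed
  finally have 3: "\<bar>\<Sum>j\<in>{1..n} - set js. R None (Some (y j))\<bar> \<le> real n * C" .
  show ?thesis unfolding nu' align_score_def using 1 2 3 by simp
qed

lemma align_score_lin:
  "align_score (\<lambda>u v. a * S u v + b * T u v) n x y \<nu> = a * align_score S n x y \<nu> + b * align_score T n x y \<nu>"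
  by (cases \<nu>) (simp add: align_score_def sum.distrib sum_distrib_left algebra_simps)

lemma align_score_cong:
  assumes "\<nu> \<in> alignments n" "\<And>i. i \<in> {1..n} \<Longrightarrow> x i = x' i" "\<And>j. j \<in> {1..n} \<Longrightarrow> y j = y' j"
  shows "align_score R n x y \<nu> = align_score R n x' y' \<nu>"
proof -
  obtain "is" js where nu': "\<nu> = (is,js)" by (cases \<nu>)
  have s: "set is \<subseteq> {1..n}" "set js \<subseteq> {1..n}" "length is = length js"
    using assms(1) nu' by (auto simp: alignments_def)
  have "(\<Sum>l<length is. R (Some (x (is ! l))) (Some (y (js ! l)))) = (\<Sum>l<length is. R (Some (x' (is ! l))) (Some (y' (js ! l))))"
  proof (intro sum.cong refl)
    fix l assume "l \<in> {..<length is}"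
    then have "is ! l \<in> set is" "js ! l \<in> set js" using s(3) by auto
    then have "is ! l \<in> {1..n}" "js ! l \<in> {1..n}" using s(1,2) by blast+
    then show "R (Some (x (is ! l))) (Some (y (js ! l))) = R (Some (x' (is ! l))) (Some (y' (js ! l)))"
      using assms(2,3) by simp
  qed
  moreover have "(\<Sum>i\<in>{1..n} - set is. R (Some (x i)) None) = (\<Sum>i\<in>{1..n} - set is. R (Some (x' i)) None)"
    using assms(2) by (intro sum.cong) auto
  moreover have "(\<Sum>i\<in>{1..n} - set js. R None (Some (y i))) = (\<Sum>i\<in>{1..n} - set js. R None (Some (y' i)))"
    using assms(3) by (intro sum.cong) auto
  ultimately show ?thesis by (simp add: nu' align_score_def)
qed

lemma opt_score_cong:
  assumes "\<And>i. i \<in> {1..n} \<Longrightarrow> x i = x' i" "\<And>j. j \<in> {1..n} \<Longrightarrow> y j = y' j"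
  shows "opt_score R n x y = opt_score R n x' y'"
  unfolding opt_score_def by (intro arg_cong[where f=Max] image_cong refl align_score_cong assms) auto

lemma opt_score_ge: "\<nu> \<in> alignments n \<Longrightarrow> align_score R n x y \<nu> \<le> opt_score R n x y"
  unfolding opt_score_def using alignments_finite by (intro Max_ge) auto

lemma opt_score_attained: "\<exists>\<nu>\<in>alignments n. opt_score R n x y = align_score R n x y \<nu>"
proof -
  have "Max (align_score R n x y ` alignments n) \<in> align_score R n x y ` alignments n"
    by (rule Max_in) (simp_all add: alignments_finite alignments_ne)
  thus ?thesis unfolding opt_score_def by auto
qed

lemma opt_score_bound:
  assumes C: "\<And>u v. \<bar>R u v\<bar> \<le> C"
  shows "\<bar>opt_score R n x y\<bar> \<le> 3 * real n * C"
proof -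
  obtain \<nu> where "\<nu> \<in> alignments n" "opt_score R n x y = align_score R n x y \<nu>"
    using opt_score_attained by blast
  thus ?thesis using align_score_bound[OF C] by simp
qed


lemma sum_sparse_bound:
  fixes f :: "'b \<Rightarrow> real"
  assumes "finite A" "\<And>a. a \<in> A \<Longrightarrow> \<bar>f a\<bar> \<le> B" "card {a\<in>A. f a \<noteq> 0} \<le> 1" "0 \<le> B"
  shows "\<bar>sum f A\<bar> \<le> B"
proof -
  have "sum f A = sum f {a\<in>A. f a \<noteq> 0}"
    using assms(1) by (intro sum.mono_neutral_right) auto
  also have "\<bar>\<dots>\<bar> \<le> (\<Sum>a\<in>{a\<in>A. f a \<noteq> 0}. B)"
    by (rule order_trans[OF sum_abs]) (intro sum_mono assms(2), auto)
  also have "\<dots> = real (card {a\<in>A. f a \<noteq> 0}) * B" by simp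
  also have "\<dots> \<le> 1 * B" using assms(3,4) by (intro mult_right_mono) auto
  finally show ?thesis by simp
qed

lemma align_score_diff_x:
  assumes C: "\<And>u v. \<bar>R u v\<bar> \<le> C" and nu: "\<nu> \<in> alignments n"
  shows "\<bar>align_score R n (x(i:=v)) y \<nu> - align_score R n x y \<nu>\<bar> \<le> 4 * C"
proof -
  obtain "is" js where nu': "\<nu> = (is,js)" by (cases \<nu>)
  have C0: "0 \<le> C" using C[of None None] by simp
  have dist: "distinct is" using nu nu' by (auto simp: alignments_def strict_sorted_iff)
  define f where "f l = R (Some ((x(i:=v)) (is ! l))) (Some (y (js ! l))) - R (Some (x (is ! l))) (Some (y (js ! l)))" for l
  define g where "g j = R (Some ((x(i:=v)) j)) None - R (Some (x j)) None" for j
  have "align_score R n (x(i:=v)) y \<nu> - align_score R n x y \<nu> = sum f {..<length is} + sum g ({1..n} - set is)"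
    by (simp add: nu' align_score_def f_def g_def sum_subtractf)
  moreover have "\<bar>sum f {..<length is}\<bar> \<le> 2 * C"
  proof (rule sum_sparse_bound)
    show "\<bar>f a\<bar> \<le> 2 * C" for a unfolding f_def
      using C[of "Some ((x(i:=v)) (is ! a))" "Some (y (js ! a))"] C[of "Some (x (is ! a))" "Some (y (js ! a))"]
      by linarith
    have "{a \<in> {..<length is}. f a \<noteq> 0} \<subseteq> {l. l < length is \<and> is ! l = i}"
      by (auto simp: f_def)
    moreover have "card {l. l < length is \<and> is ! l = i} \<le> 1"
      using dist by (auto simp: card_le_Suc0_iff_eq nth_eq_iff_index_eq)
    moreover have "finite {l. l < length is \<and> is ! l = i}" by simp
    ultimately show "card {a \<in> {..<length is}. f a \<noteq> 0} \<le> 1"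
      using card_mono order_trans by blast
  qed (use C0 in auto)
  moreover have "\<bar>sum g ({1..n} - set is)\<bar> \<le> 2 * C"
  proof (rule sum_sparse_bound)
    show "\<bar>g a\<bar> \<le> 2 * C" for a unfolding g_def
      using C[of "Some ((x(i:=v)) a)" None] C[of "Some (x a)" None]
      by linarith
    have "{a \<in> {1..n} - set is. g a \<noteq> 0} \<subseteq> {i}"
      by (auto simp: g_def)
    then have "card {a \<in> {1..n} - set is. g a \<noteq> 0} \<le> card {i}" by (intro card_mono) auto
    then show "card {a \<in> {1..n} - set is. g a \<noteq> 0} \<le> 1" by simp
  qed (use C0 in auto)
  ultimately show ?thesis by linarith
qed

lemma align_score_swap:
  assumes "length is = length js"
  shows "align_score R n x y (is,js) = align_score (\<lambda>u v. R v u) n y x (js,is)"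
  using assms by (simp add: align_score_def)

lemma align_score_diff_y:
  assumes C: "\<And>u v. \<bar>R u v\<bar> \<le> C" and nu: "\<nu> \<in> alignments n"
  shows "\<bar>align_score R n x (y(j:=v)) \<nu> - align_score R n x y \<nu>\<bar> \<le> 4 * C"
proof -
  obtain "is" js where nu': "\<nu> = (is,js)" by (cases \<nu>)
  have l: "length is = length js" and nu2: "(js,is) \<in> alignments n" using nu nu' by (auto simp: alignments_def)
  have C': "\<bar>(\<lambda>u v. R v u) u v\<bar> \<le> C" for u v using C by simp
  show ?thesis
    using align_score_diff_x[OF C' nu2, where x=y and i=j and v=v and y=x] unfolding nu' align_score_swap[OF l] .
qed

lemma Max_diff_bound:
  fixes f g :: "'b \<Rightarrow> real"
  assumes "finite A" "A \<noteq> {}" "\<And>a. a \<in> A \<Longrightarrow> \<bar>f a - g a\<bar> \<le> c"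
  shows "\<bar>Max (f ` A) - Max (g ` A)\<bar> \<le> c"
proof -
  have "Max (f ` A) \<in> f ` A" "Max (g ` A) \<in> g ` A" using assms by (intro Max_in; simp)+
  then obtain a b where a: "a \<in> A" "Max (f ` A) = f a" and b: "b \<in> A" "Max (g ` A) = g b" by auto
  have "f b \<le> f a" using a b assms Max_ge[of "f ` A" "f b"] by auto
  moreover have "g a \<le> g b" using a b assms Max_ge[of "g ` A" "g a"] by auto
  moreover have "\<bar>f a - g a\<bar> \<le> c" "\<bar>f b - g b\<bar> \<le> c" using assms a b by auto
  ultimately show ?thesis using a b by linarith
qed

lemma opt_score_diff_x:
  assumes C: "\<And>u v. \<bar>R u v\<bar> \<le> C"
  shows "\<bar>opt_score R n (x(i:=v)) y - opt_score R n x y\<bar> \<le> 4 * C"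
  unfolding opt_score_def
  by (intro Max_diff_bound alignments_finite alignments_ne align_score_diff_x[OF C])

lemma opt_score_diff_y:
  assumes C: "\<And>u v. \<bar>R u v\<bar> \<le> C"
  shows "\<bar>opt_score R n x (y(j:=v)) - opt_score R n x y\<bar> \<le> 4 * C"
  unfolding opt_score_def
  by (intro Max_diff_bound alignments_finite alignments_ne align_score_diff_y[OF C])


lemma pair_sum_zip:
  "length is = length js \<Longrightarrow> (\<Sum>l<length is. R (Some (x (is!l))) (Some (y (js!l))))
     = sum_list (map (\<lambda>(i,j). R (Some (x i)) (Some (y j))) (zip is js))"
  by (simp add: sum_list_sum_nth atLeast0LessThan)

lemma gap_set_split:
  fixes is1 is2 :: "nat list" and m n :: nat
  assumes "set is1 \<subseteq> {1..m}" "set is2 \<subseteq> {1..n}"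
  shows "{1..m+n} - set (is1 @ map (\<lambda>i. i+m) is2) = ({1..m} - set is1) \<union> ((\<lambda>i. i+m) ` ({1..n} - set is2))"
proof (intro set_eqI iffI)
  fix k assume k: "k \<in> {1..m+n} - set (is1 @ map (\<lambda>i. i+m) is2)"
  show "k \<in> ({1..m} - set is1) \<union> ((\<lambda>i. i+m) ` ({1..n} - set is2))"
  proof (cases "k \<le> m")
    case True thus ?thesis using k by auto
  next
    case False
    then have e: "k = (k - m) + m" "k - m \<in> {1..n}" using k by auto
    have "k \<notin> (\<lambda>i. i+m) ` set is2" using k by auto
    then have "k - m \<notin> set is2" using e(1) by (metis image_eqI)
    thus ?thesis using e by blast
  qed
next
  fix k assume k: "k \<in> ({1..m} - set is1) \<union> ((\<lambda>i. i+m) ` ({1..n} - set is2))"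
  show "k \<in> {1..m+n} - set (is1 @ map (\<lambda>i. i+m) is2)"
  proof (cases "k \<in> {1..m} - set is1")
    case True
    then have "k \<notin> (\<lambda>i. i+m) ` set is2" using assms by auto
    thus ?thesis using True by auto
  next
    case False
    then obtain i where i: "k = i + m" "i \<in> {1..n}" "i \<notin> set is2" using k by auto
    then have "k \<notin> set is1" using assms by auto
    thus ?thesis using i by auto
  qed
qed

lemma gap_sum_split:
  fixes is1 is2 :: "nat list" and m n :: nat
  assumes "set is1 \<subseteq> {1..m}" "set is2 \<subseteq> {1..n}"
  shows "(\<Sum>i\<in>{1..m+n} - set (is1 @ map (\<lambda>i. i+m) is2). f i)
     = (\<Sum>i\<in>{1..m} - set is1. f i) + (\<Sum>i\<in>{1..n} - set is2. f (i+m))"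
proof -
  have d: "({1..m} - set is1) \<inter> ((\<lambda>i. i+m) ` ({1..n} - set is2)) = {}" by auto
  show ?thesis unfolding gap_set_split[OF assms]
    by (subst sum.union_disjoint[OF _ _ d]) (auto simp: sum.reindex)
qed

lemma align_concat:
  assumes a1: "(is1,js1) \<in> alignments m" and a2: "(is2,js2) \<in> alignments n"
  shows "(is1 @ map (\<lambda>i. i+m) is2, js1 @ map (\<lambda>j. j+m) js2) \<in> alignments (m+n)"
    and "align_score R (m+n) x y (is1 @ map (\<lambda>i. i+m) is2, js1 @ map (\<lambda>j. j+m) js2)
         = align_score R m x y (is1,js1) + align_score R n (\<lambda>i. x (i+m)) (\<lambda>j. y (j+m)) (is2,js2)"
proof -
  have h1: "length is1 = length js1" "sorted_wrt (<) is1" "sorted_wrt (<) js1" "set is1 \<subseteq> {1..m}" "set js1 \<subseteq> {1..m}"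
    using a1 by (auto simp: alignments_def)
  have h2: "length is2 = length js2" "sorted_wrt (<) is2" "sorted_wrt (<) js2" "set is2 \<subseteq> {1..n}" "set js2 \<subseteq> {1..n}"
    using a2 by (auto simp: alignments_def)
  have sw: "sorted_wrt (<) (xs1 @ map (\<lambda>i. i+m) xs2)" if "sorted_wrt (<) xs1" "sorted_wrt (<) xs2"
     "set xs1 \<subseteq> {1..m}" "set xs2 \<subseteq> {1..n}" for xs1 xs2
  proof -
    have "\<forall>a\<in>set xs1. \<forall>b\<in>set (map (\<lambda>i. i+m) xs2). a < b"
    proof (intro ballI)
      fix a b assume "a \<in> set xs1" "b \<in> set (map (\<lambda>i. i+m) xs2)"
      then have "a \<le> m" "b \<ge> 1 + m" using that(3,4) by auto
      thus "a < b" by simp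
    qed
    thus ?thesis using that(1,2) by (simp add: sorted_wrt_append sorted_wrt_map)
  qed
  show "(is1 @ map (\<lambda>i. i+m) is2, js1 @ map (\<lambda>j. j+m) js2) \<in> alignments (m+n)"
    using h1 h2 sw[of is1 is2] sw[of js1 js2] by (auto simp: alignments_def subset_iff)
  have z: "zip (is1 @ map (\<lambda>i. i+m) is2) (js1 @ map (\<lambda>j. j+m) js2) = zip is1 js1 @ zip (map (\<lambda>i. i+m) is2) (map (\<lambda>j. j+m) js2)"
    using h1 by simp
  have l: "length (is1 @ map (\<lambda>i. i+m) is2) = length (js1 @ map (\<lambda>j. j+m) js2)" using h1 h2 by simp
  have hz: "(\<Sum>l<length is2. R (Some (x (is2!l + m))) (Some (y (js2!l + m)))) = sum_list (map (\<lambda>(i,j). R (Some (x (i+m))) (Some (y (j+m)))) (zip is2 js2))"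
    using h2(1) by (simp add: sum_list_sum_nth atLeast0LessThan)
  show "align_score R (m+n) x y (is1 @ map (\<lambda>i. i+m) is2, js1 @ map (\<lambda>j. j+m) js2)
         = align_score R m x y (is1,js1) + align_score R n (\<lambda>i. x (i+m)) (\<lambda>j. y (j+m)) (is2,js2)"
    unfolding align_score_def prod.case
    unfolding pair_sum_zip[OF l] pair_sum_zip[OF h1(1)] pair_sum_zip[OF h2(1)] z
    unfolding gap_sum_split[OF h1(4) h2(4)] gap_sum_split[OF h1(5) h2(5)]
    using hz by (simp add: zip_map_map comp_def split_def)
qed

lemma opt_superadd:
  "opt_score R (m+n) x y \<ge> opt_score R m x y + opt_score R n (\<lambda>i. x (i+m)) (\<lambda>j. y (j+m))"
proof -
  obtain \<nu>1 where n1: "\<nu>1 \<in> alignments m" "opt_score R m x y = align_score R m x y \<nu>1"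
    using opt_score_attained by blast
  obtain \<nu>2 where n2: "\<nu>2 \<in> alignments n" "opt_score R n (\<lambda>i. x (i+m)) (\<lambda>j. y (j+m)) = align_score R n (\<lambda>i. x (i+m)) (\<lambda>j. y (j+m)) \<nu>2"
    using opt_score_attained by blast
  obtain is1 js1 is2 js2 where e: "\<nu>1 = (is1,js1)" "\<nu>2 = (is2,js2)" by (cases \<nu>1, cases \<nu>2)
  have "align_score R (m+n) x y (is1 @ map (\<lambda>i. i+m) is2, js1 @ map (\<lambda>j. j+m) js2) \<le> opt_score R (m+n) x y"
    by (rule opt_score_ge[OF align_concat(1)[OF n1(1)[unfolded e] n2(1)[unfolded e]]])
  then show ?thesis
    using align_concat(2)[OF n1(1)[unfolded e] n2(1)[unfolded e], of R x y] align_concat(1)[OF n1(1)[unfolded e] n2(1)[unfolded e]] n1 n2 e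
      opt_score_ge[of _ "m+n" R x y] by auto
qed


definition pts :: "('a option \<Rightarrow> 'a option \<Rightarrow> real) \<Rightarrow> ('a option \<Rightarrow> 'a option \<Rightarrow> real)
     \<Rightarrow> nat \<Rightarrow> (nat \<Rightarrow> 'a) \<Rightarrow> (nat \<Rightarrow> 'a) \<Rightarrow> (real \<times> real) set" where
  "pts S T n x y = (\<lambda>\<nu>. (align_score S n x y \<nu> / real n, align_score T n x y \<nu> / real n)) ` alignments n"

lemma pts_finite: "finite (pts S T n x y)" and pts_ne: "pts S T n x y \<noteq> {}"
  by (auto simp: pts_def alignments_finite alignments_ne)

lemma score_set_eq: "score_set S T n x y = convex hull (pts S T n x y)"
  unfolding score_set_def pts_def[symmetric]
  by (intro closure_closed compact_imp_closed finite_imp_compact_convex_hull pts_finite)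

lemma score_set_compact: "compact (score_set S T n x y)"
  unfolding score_set_eq by (intro finite_imp_compact_convex_hull pts_finite)

lemma score_set_convex: "convex (score_set S T n x y)"
  unfolding score_set_eq by simp

lemma score_set_ne: "score_set S T n x y \<noteq> {}"
  unfolding score_set_eq using pts_ne by simp

lemma pts_sub: "pts S T n x y \<subseteq> score_set S T n x y"
  unfolding score_set_eq by (rule hull_subset)

lemma inner_pair: "(a, b) \<bullet> z = a * fst z + b * snd z" for a b :: real
  by (cases z) (simp add: inner_prod_def)

lemma pts_le:
  assumes "z \<in> pts S T n x y"
  shows "a * fst z + b * snd z \<le> opt_score (\<lambda>u v. a * S u v + b * T u v) n x y / real n"
proof -
  obtain \<nu> where nu: "\<nu> \<in> alignments n" "z = (align_score S n x y \<nu> / real n, align_score T n x y \<nu> / real n)"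
    using assms by (auto simp: pts_def)
  have "a * fst z + b * snd z = align_score (\<lambda>u v. a * S u v + b * T u v) n x y \<nu> / real n"
    using nu by (simp add: align_score_lin add_divide_distrib)
  also have "\<dots> \<le> opt_score (\<lambda>u v. a * S u v + b * T u v) n x y / real n"
    by (intro divide_right_mono opt_score_ge nu) auto
  finally show ?thesis .
qed

lemma score_set_le:
  assumes "z \<in> score_set S T n x y"
  shows "a * fst z + b * snd z \<le> opt_score (\<lambda>u v. a * S u v + b * T u v) n x y / real n"
proof -
  let ?H = "{z. (a,b) \<bullet> z \<le> opt_score (\<lambda>u v. a * S u v + b * T u v) n x y / real n}"
  have "convex hull (pts S T n x y) \<subseteq> ?H"
  proof (rule hull_minimal)
    show "pts S T n x y \<subseteq> ?H" using pts_le by (auto simp: inner_pair)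
    show "convex ?H" by (rule convex_halfspace_le)
  qed
  thus ?thesis using assms unfolding score_set_eq by (auto simp: inner_pair)
qed

lemma pts_attain:
  "\<exists>z\<in>pts S T n x y. a * fst z + b * snd z = opt_score (\<lambda>u v. a * S u v + b * T u v) n x y / real n"
proof -
  obtain \<nu> where nu: "\<nu> \<in> alignments n"
    "opt_score (\<lambda>u v. a * S u v + b * T u v) n x y = align_score (\<lambda>u v. a * S u v + b * T u v) n x y \<nu>"
    using opt_score_attained by blast
  show ?thesis
    by (rule bexI[of _ "(align_score S n x y \<nu> / real n, align_score T n x y \<nu> / real n)"])
       (use nu in \<open>auto simp: pts_def align_score_lin add_divide_distrib\<close>)
qed

lemma score_set_SUP:
  "(SUP z\<in>score_set S T n x y. a * fst z + b * snd z) = opt_score (\<lambda>u v. a * S u v + b * T u v) n x y / real n"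
proof (rule antisym)
  show "(SUP z\<in>score_set S T n x y. a * fst z + b * snd z) \<le> opt_score (\<lambda>u v. a * S u v + b * T u v) n x y / real n"
    by (intro cSUP_least score_set_ne score_set_le)
  obtain z where z: "z \<in> pts S T n x y" "a * fst z + b * snd z = opt_score (\<lambda>u v. a * S u v + b * T u v) n x y / real n"
    using pts_attain by blast
  have "bdd_above ((\<lambda>z. a * fst z + b * snd z) ` score_set S T n x y)"
    using score_set_le by (intro bdd_aboveI) auto
  then show "opt_score (\<lambda>u v. a * S u v + b * T u v) n x y / real n \<le> (SUP z\<in>score_set S T n x y. a * fst z + b * snd z)"
  proof -
    have zz: "z \<in> score_set S T n x y" using z pts_sub by blast
    show ?thesis using cSUP_upper[OF zz \<open>bdd_above _\<close>] z(2) by simp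
  qed
qed


lemma exp_bind_fin:
  fixes h :: "'b \<Rightarrow> real"
  assumes "finite (set_pmf p)" "\<And>x. x \<in> set_pmf p \<Longrightarrow> finite (set_pmf (f x))"
  shows "measure_pmf.expectation (p \<bind> f) h = measure_pmf.expectation p (\<lambda>x. measure_pmf.expectation (f x) h)"
proof -
  have "measure_pmf.expectation (p \<bind> f) h = (\<Sum>a\<in>set_pmf p. pmf p a *\<^sub>R measure_pmf.expectation (f a) h)"
    using assms by (intro pmf_expectation_bind) auto
  also have "\<dots> = measure_pmf.expectation p (\<lambda>x. measure_pmf.expectation (f x) h)"
    using assms by (intro integral_measure_pmf[symmetric]) auto
  finally show ?thesis .
qed

lemma exp_abs_le:
  fixes u :: "'b \<Rightarrow> real"
  assumes "finite (set_pmf p)" "\<And>y. y \<in> set_pmf p \<Longrightarrow> \<bar>u y\<bar> \<le> c"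
  shows "\<bar>measure_pmf.expectation p u\<bar> \<le> c"
proof -
  have i: "integrable (measure_pmf p) u" using assms(1) by (rule integrable_measure_pmf_finite)
  have b1: "u y \<le> c" "-c \<le> u y" if "y \<in> set_pmf p" for y using assms(2)[OF that] by linarith+
  have "measure_pmf.expectation p u \<le> measure_pmf.expectation p (\<lambda>_. c)"
    using b1 by (intro integral_mono_AE i) (auto simp: AE_measure_pmf_iff)
  moreover have "measure_pmf.expectation p (\<lambda>_. -c) \<le> measure_pmf.expectation p u"
    using b1 by (intro integral_mono_AE i) (auto simp: AE_measure_pmf_iff)
  ultimately show ?thesis by simp
qed

lemma exp_var_shift:
  fixes F :: "'b \<Rightarrow> real"
  assumes "finite (set_pmf p)"
  shows "measure_pmf.expectation p (\<lambda>y. (F y - m)\<^sup>2)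
       = measure_pmf.expectation p (\<lambda>y. (F y - measure_pmf.expectation p F)\<^sup>2) + (measure_pmf.expectation p F - m)\<^sup>2"
proof -
  let ?E = "measure_pmf.expectation p"
  have i: "integrable (measure_pmf p) g" for g :: "'b \<Rightarrow> real" using assms by (rule integrable_measure_pmf_finite)
  have e: "?E (\<lambda>y. (F y - t)\<^sup>2) = ?E (\<lambda>y. (F y)\<^sup>2) - 2 * t * ?E F + t\<^sup>2" for t
  proof -
    have "?E (\<lambda>y. (F y - t)\<^sup>2) = ?E (\<lambda>y. (F y)\<^sup>2 - 2 * t * F y + t\<^sup>2)"
      by (simp add: power2_eq_square algebra_simps)
    also have "\<dots> = ?E (\<lambda>y. (F y)\<^sup>2) - ?E (\<lambda>y. 2 * t * F y) + ?E (\<lambda>y. t\<^sup>2)"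
      using i by simp
    also have "\<dots> = ?E (\<lambda>y. (F y)\<^sup>2) - 2 * t * ?E F + t\<^sup>2"
      by simp
    finally show ?thesis .
  qed
  show ?thesis unfolding e by (simp add: power2_eq_square algebra_simps)
qed

lemma Pi_pmf_insert_bind:
  assumes "finite B" "x \<notin> B"
  shows "Pi_pmf (insert x B) d P = Pi_pmf B d P \<bind> (\<lambda>g. map_pmf (\<lambda>y. g(x:=y)) (P x))"
  unfolding Pi_pmf_insert'[OF assms] map_pmf_def
  by (subst bind_commute_pmf) simp

lemma Pi_pmf_fin_support:
  fixes P :: "'k \<Rightarrow> 'a::finite pmf"
  assumes "finite A"
  shows "finite (set_pmf (Pi_pmf A d P))"
  by (rule finite_subset[OF set_Pi_pmf_subset'[OF assms]]) (use assms in auto)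

lemma var_bounded_diff:
  fixes P :: "'k \<Rightarrow> 'a::finite pmf" and f :: "('k \<Rightarrow> 'a) \<Rightarrow> real"
  assumes "finite A"
    and "\<And>g i v. i \<in> A \<Longrightarrow> \<bar>f (g(i:=v)) - f g\<bar> \<le> c"
  shows "measure_pmf.expectation (Pi_pmf A d P)
           (\<lambda>g. (f g - measure_pmf.expectation (Pi_pmf A d P) f)\<^sup>2) \<le> real (card A) * c\<^sup>2"
  using assms
proof (induction A arbitrary: f rule: finite_induct)
  case empty
  then show ?case by simp
next
  case (insert x B)
  let ?QB = "Pi_pmf B d P"
  let ?E = "measure_pmf.expectation"
  define h where "h g = ?E (P x) (\<lambda>y. f (g(x:=y)))" for g
  have finQ: "finite (set_pmf ?QB)" using insert by (intro Pi_pmf_fin_support)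
  have finP: "finite (set_pmf (P x))" by simp
  have finM: "finite (set_pmf (map_pmf (\<lambda>y. g(x:=y)) (P x)))" for g by simp
  have Qeq: "Pi_pmf (insert x B) d P = ?QB \<bind> (\<lambda>g. map_pmf (\<lambda>y. g(x:=y)) (P x))"
    using insert by (intro Pi_pmf_insert_bind)
  have Eq: "?E (Pi_pmf (insert x B) d P) u = ?E ?QB (\<lambda>g. ?E (P x) (\<lambda>y. u (g(x:=y))))" for u :: "_ \<Rightarrow> real"
    unfolding Qeq by (subst exp_bind_fin[OF finQ finM]) simp
  define m where "m = ?E ?QB h"
  have mE: "?E (Pi_pmf (insert x B) d P) f = m" unfolding Eq m_def h_def ..
  have hdiff: "\<bar>h (g(i:=v)) - h g\<bar> \<le> c" if "i \<in> B" for g i v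
  proof -
    have ix: "i \<noteq> x" using that insert by auto
    have "h (g(i:=v)) - h g = ?E (P x) (\<lambda>y. f ((g(x:=y))(i:=v)) - f (g(x:=y)))"
      unfolding h_def
      by (subst Bochner_Integration.integral_diff[OF integrable_measure_pmf_finite[OF finP] integrable_measure_pmf_finite[OF finP]])
         (simp add: fun_upd_twist[OF ix])
    also have "\<bar>\<dots>\<bar> \<le> c"
    proof (intro exp_abs_le finP)
      fix y show "\<bar>f ((g(x:=y))(i:=v)) - f (g(x:=y))\<bar> \<le> c" using insert.prems[of i "g(x:=y)" v] that by (simp add: fun_upd_def)
    qed
    finally show ?thesis .
  qed
  have IH: "?E ?QB (\<lambda>g. (h g - m)\<^sup>2) \<le> real (card B) * c\<^sup>2"
    unfolding m_def by (rule insert.IH) (erule hdiff)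
  have inner: "?E (P x) (\<lambda>y. (f (g(x:=y)) - m)\<^sup>2) \<le> c\<^sup>2 + (h g - m)\<^sup>2" for g
  proof -
    have b: "\<bar>f (g(x:=y)) - h g\<bar> \<le> c" for y
    proof -
      have "f (g(x:=y)) - h g = ?E (P x) (\<lambda>y'. f (g(x:=y)) - f (g(x:=y')))"
        unfolding h_def
        by (subst Bochner_Integration.integral_diff[OF integrable_measure_pmf_finite[OF finP] integrable_measure_pmf_finite[OF finP]]) simp
      also have "\<bar>\<dots>\<bar> \<le> c"
      proof (intro exp_abs_le finP)
        fix y' have "\<bar>f ((g(x:=y))(x:=y')) - f (g(x:=y))\<bar> \<le> c" using insert.prems[of x "g(x:=y)" y'] by (simp add: fun_upd_def)
        thus "\<bar>f (g(x:=y)) - f (g(x:=y'))\<bar> \<le> c" by simp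
      qed
      finally show ?thesis .
    qed
    have "?E (P x) (\<lambda>y. (f (g(x:=y)) - m)\<^sup>2) = ?E (P x) (\<lambda>y. (f (g(x:=y)) - h g)\<^sup>2) + (h g - m)\<^sup>2"
      unfolding h_def by (rule exp_var_shift[OF finP])
    also have "?E (P x) (\<lambda>y. (f (g(x:=y)) - h g)\<^sup>2) \<le> c\<^sup>2"
    proof -
      have "\<bar>?E (P x) (\<lambda>y. (f (g(x:=y)) - h g)\<^sup>2)\<bar> \<le> c\<^sup>2"
        by (intro exp_abs_le finP) (use b in \<open>metis abs_ge_zero power2_abs power_mono abs_of_nonneg zero_le_power2\<close>)
      thus ?thesis by simp
    qed
    finally show ?thesis by simp
  qed
  have "?E (Pi_pmf (insert x B) d P) (\<lambda>g. (f g - ?E (Pi_pmf (insert x B) d P) f)\<^sup>2)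
      = ?E ?QB (\<lambda>g. ?E (P x) (\<lambda>y. (f (g(x:=y)) - m)\<^sup>2))"
    unfolding mE by (rule Eq)
  also have "\<dots> \<le> ?E ?QB (\<lambda>g. c\<^sup>2 + (h g - m)\<^sup>2)"
    by (intro integral_mono_AE integrable_measure_pmf_finite finQ) (use inner in auto)
  also have "\<dots> = c\<^sup>2 + ?E ?QB (\<lambda>g. (h g - m)\<^sup>2)"
    by (subst Bochner_Integration.integral_add[OF integrable_measure_pmf_finite[OF finQ] integrable_measure_pmf_finite[OF finQ]]) simp
  also have "\<dots> \<le> c\<^sup>2 + real (card B) * c\<^sup>2" using IH by simp
  also have "\<dots> = real (card (insert x B)) * c\<^sup>2" using insert by (simp add: algebra_simps)
  finally show ?case .
qed


lemma (in prob_space) indep_sets_reindex: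
  fixes F :: "'i \<Rightarrow> 'a set set" and \<sigma> :: "'j \<Rightarrow> 'i"
  assumes "indep_sets F UNIV" "inj \<sigma>"
  shows "indep_sets (\<lambda>j. F (\<sigma> j)) UNIV"
  unfolding indep_sets_def
proof (intro conjI ballI allI impI)
  show "F (\<sigma> i) \<subseteq> events" for i using assms(1) by (auto simp: indep_sets_def)
  fix J :: "'j set" and A assume J: "J \<subseteq> UNIV" "J \<noteq> {}" "finite J" and A: "A \<in> Pi J (\<lambda>j. F (\<sigma> j))"
  define A' where "A' i = A (the_inv_into J \<sigma> i)" for i
  have injJ: "inj_on \<sigma> J" using assms(2) by (rule inj_on_subset) simp
  have A'A: "A' (\<sigma> j) = A j" if "j \<in> J" for j
    unfolding A'_def using the_inv_into_f_f[OF injJ that] by simp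
  have "A' \<in> Pi (\<sigma> ` J) F"
  proof
    fix i assume "i \<in> \<sigma> ` J"
    then obtain j where j: "j \<in> J" "i = \<sigma> j" by blast
    show "A' i \<in> F i" using A j A'A[OF j(1)] by (auto simp: Pi_iff)
  qed
  then have "prob (\<Inter>i\<in>\<sigma> ` J. A' i) = (\<Prod>i\<in>\<sigma> ` J. prob (A' i))"
  proof -
    have "\<sigma> ` J \<noteq> {}" "finite (\<sigma> ` J)" using J by auto
    moreover have ind: "\<And>K B. K \<noteq> {} \<Longrightarrow> finite K \<Longrightarrow> B \<in> Pi K F \<Longrightarrow> prob (\<Inter>j\<in>K. B j) = (\<Prod>j\<in>K. prob (B j))"
      using assms(1) unfolding indep_sets_def by simp
    ultimately show ?thesis using \<open>A' \<in> Pi (\<sigma> ` J) F\<close> by (intro ind) auto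
  qed
  moreover have "(\<Inter>i\<in>\<sigma> ` J. A' i) = (\<Inter>j\<in>J. A j)"
    unfolding image_image using A'A by (intro INF_cong refl) 
  moreover have "(\<Prod>i\<in>\<sigma> ` J. prob (A' i)) = (\<Prod>j\<in>J. prob (A j))"
    by (simp add: prod.reindex[OF injJ] A'A)
  ultimately show "prob (\<Inter>j\<in>J. A j) = (\<Prod>j\<in>J. prob (A j))" by simp
qed

lemma (in prob_space) indep_vars_reindex:
  assumes "indep_vars (\<lambda>_. N) Z UNIV" "inj \<sigma>"
  shows "indep_vars (\<lambda>_. N) (\<lambda>j. Z (\<sigma> j)) UNIV"
proof -
  have "indep_sets (\<lambda>i. sigma_sets (space M) {Z i -` A \<inter> space M |A. A \<in> sets N}) UNIV"
    using assms(1) unfolding indep_vars_def by simp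
  then have "indep_sets (\<lambda>j. sigma_sets (space M) {Z (\<sigma> j) -` A \<inter> space M |A. A \<in> sets N}) UNIV"
    using indep_sets_reindex[OF _ assms(2)] by blast
  moreover have "random_variable N (Z i)" for i using assms(1) unfolding indep_vars_def by simp
  ultimately show ?thesis unfolding indep_vars_def by simp
qed
lemma sets_PiM_finite_all:
  assumes "finite J"
  shows "sets (PiM J (\<lambda>_. count_space (UNIV::'a::finite set))) = Pow (space (PiM J (\<lambda>_. count_space (UNIV::'a set))))"
proof (intro equalityI subsetI)
  fix S assume "S \<in> sets (PiM J (\<lambda>_. count_space (UNIV::'a set)))"
  thus "S \<in> Pow (space (PiM J (\<lambda>_. count_space (UNIV::'a set))))" using sets.sets_into_space by auto
next
  fix S assume S: "S \<in> Pow (space (PiM J (\<lambda>_. count_space (UNIV::'a set))))"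
  have sp: "space (PiM J (\<lambda>_. count_space (UNIV::'a set))) = PiE J (\<lambda>_. UNIV)" by (simp add: space_PiM)
  have fin: "finite S"
    by (rule finite_subset[of _ "PiE J (\<lambda>_. UNIV)"]) (use S sp assms in \<open>auto intro!: finite_PiE\<close>)
  have single: "{g} \<in> sets (PiM J (\<lambda>_. count_space (UNIV::'a set)))" if "g \<in> S" for g
  proof -
    have g: "g \<in> PiE J (\<lambda>_. UNIV)" using that S sp by auto
    have "{g} = PiE J (\<lambda>j. {g j})"
    proof (intro equalityI subsetI)
      fix x assume "x \<in> {g}" thus "x \<in> PiE J (\<lambda>j. {g j})" using g by (auto simp: PiE_iff)
    next
      fix x assume x: "x \<in> PiE J (\<lambda>j. {g j})"
      have "x j = g j" for j
      proof (cases "j \<in> J")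
        case True thus ?thesis using x by (auto simp: PiE_iff)
      next
        case False thus ?thesis using x g by (auto simp: PiE_iff extensional_def)
      qed
      thus "x \<in> {g}" by auto
    qed
    also have "\<dots> \<in> sets (PiM J (\<lambda>_. count_space (UNIV::'a set)))"
      using assms by (intro sets_PiM_I_finite) auto
    finally show ?thesis .
  qed
  have "S = (\<Union>g\<in>S. {g})" by auto
  also have "\<dots> \<in> sets (PiM J (\<lambda>_. count_space (UNIV::'a set)))"
    using fin single by (intro sets.finite_UN) auto
  finally show "S \<in> sets (PiM J (\<lambda>_. count_space (UNIV::'a set)))" .
qed

lemma measurable_PiM_finite_all:
  assumes "finite J"
  shows "(u :: _ \<Rightarrow> real) \<in> borel_measurable (PiM J (\<lambda>_. count_space (UNIV::'a::finite set)))"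
  by (rule measurableI) (auto simp: sets_PiM_finite_all[OF assms])

lemma PiM_conv_Pi_pmf:
  fixes p :: "'a pmf"
  assumes "finite J" "J \<noteq> {}"
  shows "PiM J (\<lambda>_. measure_pmf p) = distr (measure_pmf (Pi_pmf J d (\<lambda>_. p))) (PiM J (\<lambda>_. count_space UNIV)) (\<lambda>f. restrict f J)"
proof -
  have "prob_space.indep_vars (measure_pmf (Pi_pmf J d (\<lambda>_. p))) (\<lambda>_. count_space UNIV) (\<lambda>x f. f x) J"
    using assms by (intro indep_vars_Pi_pmf)
  then have "distr (measure_pmf (Pi_pmf J d (\<lambda>_. p))) (PiM J (\<lambda>_. count_space UNIV)) (\<lambda>x. \<lambda>i\<in>J. x i)
      = PiM J (\<lambda>i. distr (measure_pmf (Pi_pmf J d (\<lambda>_. p))) (count_space UNIV) (\<lambda>f. f i))"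
    using assms by (subst (asm) prob_space.indep_vars_iff_distr_eq_PiM'[OF measure_pmf.prob_space_axioms]) auto
  also have "\<dots> = PiM J (\<lambda>_. measure_pmf p)"
  proof (rule PiM_cong[OF refl])
    fix i assume "i \<in> J"
    then have "map_pmf (\<lambda>f. f i) (Pi_pmf J d (\<lambda>_. p)) = p" using assms by (subst Pi_pmf_component) auto
    then show "distr (measure_pmf (Pi_pmf J d (\<lambda>_. p))) (count_space UNIV) (\<lambda>f. f i) = measure_pmf p"
      by (metis map_pmf_rep_eq)
  qed
  finally show ?thesis by simp
qed


locale lcs_setting = prob_space M for M :: "'w measure" +
  fixes p :: "'a::finite pmf" and X Y :: "nat \<Rightarrow> 'w \<Rightarrow> 'a"
  assumes indep: "indep_vars (\<lambda>_. count_space UNIV) (\<lambda>k. case k of Inl i \<Rightarrow> X i | Inr j \<Rightarrow> Y j) UNIV"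
    and distX: "\<And>i. distr M (count_space UNIV) (X i) = measure_pmf p"
    and distY: "\<And>j. distr M (count_space UNIV) (Y j) = measure_pmf p"
begin

definition Z :: "nat + nat \<Rightarrow> 'w \<Rightarrow> 'a" where
  "Z = (\<lambda>k. case k of Inl i \<Rightarrow> X i | Inr j \<Rightarrow> Y j)"

lemma rvZ: "random_variable (count_space UNIV) (Z k)"
  using indep unfolding indep_vars_def Z_def by simp

lemma distZ: "distr M (count_space UNIV) (Z k) = measure_pmf p"
  by (cases k) (simp_all add: Z_def distX distY)

lemma distr_reindex:
  assumes "inj \<sigma>" "finite J" "J \<noteq> {}"
  shows "distr M (PiM J (\<lambda>_. count_space UNIV)) (\<lambda>\<omega>. \<lambda>j\<in>J. Z (\<sigma> j) \<omega>) = PiM J (\<lambda>_. measure_pmf p)"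
proof -
  have "indep_vars (\<lambda>_. count_space UNIV) (\<lambda>j. Z (\<sigma> j)) UNIV"
    using indep_vars_reindex[OF indep[folded Z_def] assms(1)] .
  then have "indep_vars (\<lambda>_. count_space UNIV) (\<lambda>j. Z (\<sigma> j)) J"
    by (rule indep_vars_subset) simp
  then have "distr M (PiM J (\<lambda>_. count_space UNIV)) (\<lambda>\<omega>. \<lambda>j\<in>J. Z (\<sigma> j) \<omega>)
     = PiM J (\<lambda>j. distr M (count_space UNIV) (Z (\<sigma> j)))"
    using assms(3) rvZ by (subst (asm) indep_vars_iff_distr_eq_PiM) auto
  also have "\<dots> = PiM J (\<lambda>_. measure_pmf p)" by (simp add: distZ)
  finally show ?thesis .
qed

lemma transfer:
  fixes u :: "(nat + nat \<Rightarrow> 'a) \<Rightarrow> real"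
  assumes "inj \<sigma>" "finite J" "J \<noteq> {}" "\<And>f. u (restrict f J) = u f"
  shows "(\<lambda>\<omega>. u (\<lambda>j. Z (\<sigma> j) \<omega>)) \<in> borel_measurable M"
    and "integrable M (\<lambda>\<omega>. u (\<lambda>j. Z (\<sigma> j) \<omega>))"
    and "(\<integral>\<omega>. u (\<lambda>j. Z (\<sigma> j) \<omega>) \<partial>M) = measure_pmf.expectation (Pi_pmf J undefined (\<lambda>_. p)) u"
proof -
  define \<Phi> where "\<Phi> \<omega> = (\<lambda>j\<in>J. Z (\<sigma> j) \<omega>)" for \<omega>
  have Phi: "\<Phi> \<in> measurable M (PiM J (\<lambda>_. count_space UNIV))"
    unfolding \<Phi>_def by (intro measurable_restrict rvZ)
  have u: "u \<in> borel_measurable (PiM J (\<lambda>_. count_space (UNIV::'a set)))"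
    using assms(2) by (rule measurable_PiM_finite_all)
  have uPhi: "u (\<lambda>j. Z (\<sigma> j) \<omega>) = u (\<Phi> \<omega>)" for \<omega>
    unfolding \<Phi>_def using assms(4)[of "\<lambda>j. Z (\<sigma> j) \<omega>"] by simp
  have R: "(\<lambda>f. restrict f J) \<in> measurable (measure_pmf (Pi_pmf J undefined (\<lambda>_. p))) (PiM J (\<lambda>_. count_space UNIV))"
    by (simp add: space_PiM)
  have D: "distr M (PiM J (\<lambda>_. count_space UNIV)) \<Phi>
     = distr (measure_pmf (Pi_pmf J undefined (\<lambda>_. p))) (PiM J (\<lambda>_. count_space UNIV)) (\<lambda>f. restrict f J)"
    unfolding \<Phi>_def distr_reindex[OF assms(1-3)] using assms(2,3) by (rule PiM_conv_Pi_pmf)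
  show "(\<lambda>\<omega>. u (\<lambda>j. Z (\<sigma> j) \<omega>)) \<in> borel_measurable M"
    unfolding uPhi by (rule measurable_compose[OF Phi u])
  have "integrable (measure_pmf (Pi_pmf J undefined (\<lambda>_. p))) (\<lambda>f. u (restrict f J))"
    using assms(2) by (intro integrable_measure_pmf_finite Pi_pmf_fin_support)
  then have "integrable (distr M (PiM J (\<lambda>_. count_space UNIV)) \<Phi>) u"
    unfolding D by (subst integrable_distr_eq[OF R u])
  then show "integrable M (\<lambda>\<omega>. u (\<lambda>j. Z (\<sigma> j) \<omega>))"
    unfolding uPhi by (subst (asm) integrable_distr_eq[OF Phi u])
  have "(\<integral>\<omega>. u (\<lambda>j. Z (\<sigma> j) \<omega>) \<partial>M) = integral\<^sup>L (distr M (PiM J (\<lambda>_. count_space UNIV)) \<Phi>) u"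
    unfolding uPhi by (rule integral_distr[OF Phi u, symmetric])
  also have "\<dots> = measure_pmf.expectation (Pi_pmf J undefined (\<lambda>_. p)) (\<lambda>f. u (restrict f J))"
    unfolding D by (rule integral_distr[OF R u])
  also have "\<dots> = measure_pmf.expectation (Pi_pmf J undefined (\<lambda>_. p)) u"
    using assms(4) by simp
  finally show "(\<integral>\<omega>. u (\<lambda>j. Z (\<sigma> j) \<omega>) \<partial>M) = measure_pmf.expectation (Pi_pmf J undefined (\<lambda>_. p)) u" .
qed

end

lemma R_bounded: "\<exists>C. \<forall>u v. \<bar>(R :: 'a::finite option \<Rightarrow> 'a option \<Rightarrow> real) u v\<bar> \<le> C"
proof -
  define C where "C = (\<Sum>uv\<in>UNIV. \<bar>R (fst uv) (snd uv)\<bar>)"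
  have "\<bar>R u v\<bar> \<le> C" for u v
    unfolding C_def using member_le_sum[of "(u,v)" UNIV "\<lambda>uv. \<bar>R (fst uv) (snd uv)\<bar>"] by simp
  thus ?thesis by blast
qed

context lcs_setting begin

definition fR :: "('a option \<Rightarrow> 'a option \<Rightarrow> real) \<Rightarrow> nat \<Rightarrow> (nat + nat \<Rightarrow> 'a) \<Rightarrow> real" where
  "fR R n g = opt_score R n (\<lambda>i. g (Inl i)) (\<lambda>j. g (Inr j))"

definition Jn :: "nat \<Rightarrow> (nat + nat) set" where
  "Jn n = Inl ` {0..n} \<union> Inr ` {0..n}"

definition sh :: "nat \<Rightarrow> nat + nat \<Rightarrow> nat + nat" where
  "sh m = map_sum (\<lambda>i. i+m) (\<lambda>i. i+m)"

definition Ex :: "('a option \<Rightarrow> 'a option \<Rightarrow> real) \<Rightarrow> nat \<Rightarrow> real" where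
  "Ex R n = measure_pmf.expectation (Pi_pmf (Jn n) undefined (\<lambda>_. p)) (fR R n)"

lemma Jn_fin: "finite (Jn n)" and Jn_ne: "Jn n \<noteq> {}"
  by (auto simp: Jn_def)

lemma Jn_card: "card (Jn n) = 2 * (n + 1)"
proof -
  have "card (Jn n) = card (Inl ` {0..n} :: (nat+nat) set) + card (Inr ` {0..n} :: (nat+nat) set)"
    unfolding Jn_def by (intro card_Un_disjoint) auto
  also have "\<dots> = 2 * (n+1)" by (simp add: card_image)
  finally show ?thesis .
qed

lemma inj_sh: "inj (sh m)"
proof (rule injI)
  fix x y assume "sh m x = sh m y"
  thus "x = y" by (cases x; cases y) (simp_all add: sh_def)
qed

lemma fR_restrict: "fR R n (restrict f (Jn n)) = fR R n f"
  unfolding fR_def by (intro opt_score_cong) (auto simp: Jn_def)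

lemma Fn_eq: "opt_score R n (\<lambda>i. X i \<omega>) (\<lambda>j. Y j \<omega>) = fR R n (\<lambda>k. Z k \<omega>)"
  by (simp add: fR_def Z_def)

lemma Gn_eq: "opt_score R n (\<lambda>i. X (i+m) \<omega>) (\<lambda>j. Y (j+m) \<omega>) = fR R n (\<lambda>k. Z (sh m k) \<omega>)"
  by (simp add: fR_def Z_def sh_def)

lemma fR_diff:
  assumes C: "\<And>u v. \<bar>R u v\<bar> \<le> C"
  shows "\<bar>fR R n (g(k:=v)) - fR R n g\<bar> \<le> 4 * C"
proof (cases k)
  case (Inl i)
  have "(\<lambda>i'. (g(k:=v)) (Inl i')) = (\<lambda>i'. g (Inl i'))(i:=v)" using Inl by (auto simp: fun_eq_iff)
  moreover have "(\<lambda>j. (g(k:=v)) (Inr j)) = (\<lambda>j. g (Inr j))" using Inl by auto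
  ultimately show ?thesis unfolding fR_def using opt_score_diff_x[OF C] by simp
next
  case (Inr i)
  have "(\<lambda>i'. (g(k:=v)) (Inr i')) = (\<lambda>i'. g (Inr i'))(i:=v)" using Inr by (auto simp: fun_eq_iff)
  moreover have "(\<lambda>j. (g(k:=v)) (Inl j)) = (\<lambda>j. g (Inl j))" using Inr by auto
  ultimately show ?thesis unfolding fR_def using opt_score_diff_y[OF C] by simp
qed

lemmas transfer_id = transfer[of "\<lambda>k. k", simplified]

lemma Fn_facts:
  "(\<lambda>\<omega>. opt_score R n (\<lambda>i. X i \<omega>) (\<lambda>j. Y j \<omega>)) \<in> borel_measurable M"
  "integrable M (\<lambda>\<omega>. opt_score R n (\<lambda>i. X i \<omega>) (\<lambda>j. Y j \<omega>))"
  "(\<integral>\<omega>. opt_score R n (\<lambda>i. X i \<omega>) (\<lambda>j. Y j \<omega>) \<partial>M) = Ex R n"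
  unfolding Fn_eq Ex_def
  by (rule transfer_id[where J="Jn n" and u="fR R n", OF Jn_fin Jn_ne fR_restrict])+

lemma Gn_facts:
  "(\<lambda>\<omega>. opt_score R n (\<lambda>i. X (i+m) \<omega>) (\<lambda>j. Y (j+m) \<omega>)) \<in> borel_measurable M"
  "integrable M (\<lambda>\<omega>. opt_score R n (\<lambda>i. X (i+m) \<omega>) (\<lambda>j. Y (j+m) \<omega>))"
  "(\<integral>\<omega>. opt_score R n (\<lambda>i. X (i+m) \<omega>) (\<lambda>j. Y (j+m) \<omega>) \<partial>M) = Ex R n"
  unfolding Gn_eq Ex_def
  by (rule transfer[where J="Jn n" and u="fR R n" and \<sigma>="sh m", OF inj_sh Jn_fin Jn_ne fR_restrict])+

lemma Fn2_int: "integrable M (\<lambda>\<omega>. (opt_score R n (\<lambda>i. X i \<omega>) (\<lambda>j. Y j \<omega>))\<^sup>2)"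
  unfolding Fn_eq using transfer_id(2)[OF Jn_fin Jn_ne, of "\<lambda>g. (fR R n g)\<^sup>2" n] fR_restrict by simp

lemma Ex_superadd: "Ex R m + Ex R n \<le> Ex R (m+n)"
proof -
  have "(\<integral>\<omega>. opt_score R m (\<lambda>i. X i \<omega>) (\<lambda>j. Y j \<omega>) + opt_score R n (\<lambda>i. X (i+m) \<omega>) (\<lambda>j. Y (j+m) \<omega>) \<partial>M)
      \<le> (\<integral>\<omega>. opt_score R (m+n) (\<lambda>i. X i \<omega>) (\<lambda>j. Y j \<omega>) \<partial>M)"
    by (intro integral_mono Bochner_Integration.integrable_add Fn_facts Gn_facts opt_superadd)
  thus ?thesis
    by (simp add: Bochner_Integration.integral_add[OF Fn_facts(2) Gn_facts(2)] Fn_facts(3) Gn_facts(3))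
qed

lemma Ex_bound:
  assumes C: "\<And>u v. \<bar>R u v\<bar> \<le> C"
  shows "\<bar>Ex R n\<bar> \<le> 3 * real n * C"
proof -
  have "\<bar>Ex R n\<bar> = \<bar>\<integral>\<omega>. opt_score R n (\<lambda>i. X i \<omega>) (\<lambda>j. Y j \<omega>) \<partial>M\<bar>" by (simp add: Fn_facts(3))
  also have "\<dots> \<le> (\<integral>\<omega>. \<bar>opt_score R n (\<lambda>i. X i \<omega>) (\<lambda>j. Y j \<omega>)\<bar> \<partial>M)" by (rule integral_abs_bound)
  also have "\<dots> \<le> (\<integral>\<omega>. 3 * real n * C \<partial>M)"
    by (intro integral_mono Bochner_Integration.integrable_abs Fn_facts opt_score_bound[OF C]) simp
  also have "\<dots> = 3 * real n * C" by (simp add: prob_space)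
  finally show ?thesis .
qed

lemma Fn_var:
  assumes C: "\<And>u v. \<bar>R u v\<bar> \<le> C"
  shows "(\<integral>\<omega>. (opt_score R n (\<lambda>i. X i \<omega>) (\<lambda>j. Y j \<omega>) - Ex R n)\<^sup>2 \<partial>M) \<le> real (2 * (n+1)) * (4*C)\<^sup>2"
proof -
  have "(\<integral>\<omega>. (opt_score R n (\<lambda>i. X i \<omega>) (\<lambda>j. Y j \<omega>) - Ex R n)\<^sup>2 \<partial>M)
     = measure_pmf.expectation (Pi_pmf (Jn n) undefined (\<lambda>_. p)) (\<lambda>g. (fR R n g - Ex R n)\<^sup>2)"
    unfolding Fn_eq using transfer_id(3)[OF Jn_fin Jn_ne, of "\<lambda>g. (fR R n g - Ex R n)\<^sup>2" n] fR_restrict by simp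
  also have "\<dots> \<le> real (card (Jn n)) * (4*C)\<^sup>2"
    unfolding Ex_def by (intro var_bounded_diff Jn_fin fR_diff[OF C])
  finally show ?thesis by (simp add: Jn_card)
qed

end

lemma superadd_mult:
  fixes a :: "nat \<Rightarrow> real"
  assumes sup: "\<And>m n. a m + a n \<le> a (m+n)"
  shows "real q * a m + a r \<le> a (q*m + r)"
proof (induction q)
  case 0 then show ?case by simp
next
  case (Suc q)
  have "real (Suc q) * a m + a r = a m + (real q * a m + a r)" by (simp add: algebra_simps)
  also have "\<dots> \<le> a m + a (q*m + r)" using Suc by simp
  also have "\<dots> \<le> a (m + (q*m + r))" by (rule sup)
  finally show ?case by (simp add: add.assoc)
qed

lemma fekete:
  fixes a :: "nat \<Rightarrow> real"
  assumes sup: "\<And>m n. a m + a n \<le> a (m+n)" and bd: "\<And>n. \<bar>a n\<bar> \<le> B * real n"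
  shows "(\<lambda>n. a n / real n) \<longlonglongrightarrow> (SUP n\<in>{1..}. a n / real n)"
proof -
  define s where "s = (SUP n\<in>{1..}. a n / real n)"
  have bdd: "bdd_above ((\<lambda>n. a n / real n) ` {1..})"
  proof (rule bdd_aboveI)
    fix x assume "x \<in> (\<lambda>n. a n / real n) ` {1..}"
    then obtain n where n: "n \<ge> 1" "x = a n / real n" by auto
    have "a n \<le> B * real n" using bd[of n] by linarith
    thus "x \<le> B" using n by (simp add: divide_le_eq)
  qed
  have up: "a n / real n \<le> s" if "n \<ge> 1" for n
    unfolding s_def using that bdd by (intro cSUP_upper) auto
  show ?thesis unfolding s_def[symmetric]
  proof (rule LIMSEQ_I)
    fix r :: real assume r: "r > 0"
    have "s - r/2 < s" using r by simp
    then obtain m where m: "m \<ge> 1" "s - r/2 < a m / real m"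
      unfolding s_def using bdd by (subst (asm) less_cSUP_iff) auto
    define t where "t = a m / real m"
    define K where "K = \<bar>t\<bar> * real m + B * real m"
    have B0: "B \<ge> 0" using bd[of 1] by simp
    have K0: "K \<ge> 0" unfolding K_def using B0 by simp
    define no where "no = max m (nat \<lceil>2 * K / r\<rceil> + 1)"
    show "\<exists>no. \<forall>n\<ge>no. norm (a n / real n - s) < r"
    proof (intro exI allI impI)
      fix n assume n: "n \<ge> no"
      then have n1: "n \<ge> 1" "n \<ge> m" using m by (auto simp: no_def)
      have nK: "real n > 2 * K / r" using n unfolding no_def by linarith
      define q where "q = n div m"
      define rr where "rr = n mod m"
      have nq: "n = q * m + rr" unfolding q_def rr_def by simp
      have rrm: "rr < m" unfolding rr_def using m by simp
      have "real q * a m + a rr \<le> a n" using superadd_mult[OF sup, of q m rr] nq by simp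
      moreover have "a rr \<ge> - B * real rr" using bd[of rr] by linarith
      moreover have "real q * a m = (real n - real rr) * t"
        unfolding t_def using m nq by (simp add: field_simps)
      moreover have "\<bar>real rr * t\<bar> \<le> \<bar>t\<bar> * real m"
      proof -
        have "real rr * \<bar>t\<bar> \<le> real m * \<bar>t\<bar>" using rrm by (intro mult_right_mono) auto
        thus ?thesis by (simp add: abs_mult mult.commute)
      qed
      moreover have "B * real rr \<le> B * real m" using rrm B0 by (simp add: mult_left_mono)
      ultimately have lo: "a n \<ge> real n * t - K" unfolding K_def by (simp add: algebra_simps)
      have "K / real n < r / 2"
      proof -
        have "2 * K < r * real n" using nK r by (simp add: pos_divide_less_eq mult.commute)
        thus ?thesis using n1 by (simp add: divide_less_eq)
      qed
      moreover have "a n / real n \<ge> t - K / real n"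
      proof -
        have "t - K / real n = (real n * t - K) / real n" using n1 by (simp add: field_simps)
        also have "\<dots> \<le> a n / real n" using lo by (intro divide_right_mono) auto
        finally show ?thesis .
      qed
      ultimately have "a n / real n > s - r" using m(2) unfolding t_def by linarith
      moreover have "a n / real n \<le> s" using up n1 by simp
      ultimately show "norm (a n / real n - s) < r" using r by simp
    qed
  qed
qed


definition isqrt :: "nat \<Rightarrow> nat" where "isqrt n = nat \<lfloor>sqrt (real n)\<rfloor>"

lemma isqrt_bounds: "(isqrt n)^2 \<le> n" "n < (isqrt n + 1)^2"
proof -
  have s0: "sqrt (real n) \<ge> 0" by simp
  have a: "real (isqrt n) \<le> sqrt (real n)" unfolding isqrt_def using s0 by linarith
  have b: "sqrt (real n) < real (isqrt n) + 1" unfolding isqrt_def using s0 by linarith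
  have "(real (isqrt n))^2 \<le> (sqrt (real n))^2" using a by (rule power_mono) simp
  then have "real ((isqrt n)^2) \<le> real n" by simp
  then show "(isqrt n)^2 \<le> n" by (simp only: of_nat_le_iff)
  have "(sqrt (real n))^2 < (real (isqrt n) + 1)^2" using b s0 by (intro power_strict_mono) auto
  then have "real n < real ((isqrt n + 1)^2)" by (simp add: ac_simps)
  then show "n < (isqrt n + 1)^2" by linarith
qed

lemma isqrt_ge1: "n \<ge> 1 \<Longrightarrow> isqrt n \<ge> 1"
  unfolding isqrt_def by (simp add: le_nat_iff)

lemma isqrt_pos: "n \<ge> 1 \<Longrightarrow> 0 < real ((isqrt n)^2)"
  using isqrt_ge1[of n] by simp

lemma isqrt_filterlim: "filterlim isqrt at_top sequentially"
proof (rule filterlim_at_top_mono[of "\<lambda>n. nat \<lfloor>sqrt (real n)\<rfloor>"])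
  show "filterlim (\<lambda>n. nat \<lfloor>sqrt (real n)\<rfloor>) at_top sequentially"
    by (intro filterlim_compose[OF filterlim_nat_sequentially] filterlim_compose[OF filterlim_floor_sequentially]
         filterlim_compose[OF sqrt_at_top] filterlim_real_sequentially)
qed (simp add: isqrt_def)

lemma interp_lim:
  fixes F :: "nat \<Rightarrow> real"
  assumes lim: "(\<lambda>j. F ((Suc j)^2) / real ((Suc j)^2)) \<longlonglongrightarrow> L"
    and sup: "\<And>m n. F m - c * real n \<le> F (m + n)" and c: "c \<ge> 0"
  shows "(\<lambda>n. F n / real n) \<longlonglongrightarrow> L"
proof -
  let ?k = "isqrt"
  have u0: "(\<lambda>j. F (j^2) / real (j^2)) \<longlonglongrightarrow> L"
    using lim by (subst filterlim_sequentially_Suc[symmetric]) simp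
  have u: "(\<lambda>n. F ((?k n)^2) / real ((?k n)^2)) \<longlonglongrightarrow> L"
    by (rule filterlim_compose[OF u0 isqrt_filterlim])
  have v: "(\<lambda>n. F ((?k n + 1)^2) / real ((?k n + 1)^2)) \<longlonglongrightarrow> L"
    by (rule filterlim_compose[OF lim[unfolded Suc_eq_plus1] isqrt_filterlim])
  have g1: "(\<lambda>k::nat. real (k^2) / real ((k+1)^2)) \<longlonglongrightarrow> 1" by real_asymp
  have g2: "(\<lambda>k::nat. real ((k+1)^2) / real (k^2)) \<longlonglongrightarrow> 1" by real_asymp
  have g3: "(\<lambda>k::nat. real (2*k+1) / real (k^2)) \<longlonglongrightarrow> 0" by real_asymp
  have ev1: "eventually (\<lambda>n. n \<ge> 1) sequentially" by (rule eventually_ge_at_top)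
  have h1: "(\<lambda>n. real ((?k n)^2) / real n) \<longlonglongrightarrow> 1"
  proof (rule tendsto_sandwich[OF _ _ filterlim_compose[OF g1 isqrt_filterlim] tendsto_const])
    show "eventually (\<lambda>n. real ((?k n)^2) / real ((?k n + 1)^2) \<le> real ((?k n)^2) / real n) sequentially"
      using ev1 by eventually_elim (use isqrt_bounds isqrt_bounds(2)[THEN less_imp_le] in \<open>auto intro!: divide_left_mono simp del: of_nat_power\<close>)
    show "eventually (\<lambda>n. real ((?k n)^2) / real n \<le> 1) sequentially"
      using ev1 by eventually_elim (use isqrt_bounds in \<open>auto simp del: of_nat_power\<close>)
  qed
  have h2: "(\<lambda>n. real ((?k n + 1)^2) / real n) \<longlonglongrightarrow> 1"
  proof (rule tendsto_sandwich[OF _ _ tendsto_const filterlim_compose[OF g2 isqrt_filterlim]])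
    show "eventually (\<lambda>n. 1 \<le> real ((?k n + 1)^2) / real n) sequentially"
      using ev1 by eventually_elim (use isqrt_bounds(2)[THEN less_imp_le] in \<open>auto simp del: of_nat_power\<close>)
    show "eventually (\<lambda>n. real ((?k n + 1)^2) / real n \<le> real ((?k n + 1)^2) / real ((?k n)^2)) sequentially"
      using ev1 by eventually_elim (use isqrt_bounds isqrt_pos in \<open>auto intro!: divide_left_mono mult_pos_pos simp del: of_nat_power\<close>)
  qed
  have h3: "(\<lambda>n. real (2 * ?k n + 1) / real n) \<longlonglongrightarrow> 0"
  proof (rule tendsto_sandwich[OF _ _ tendsto_const filterlim_compose[OF g3 isqrt_filterlim]])
    show "eventually (\<lambda>n. 0 \<le> real (2 * ?k n + 1) / real n) sequentially" by simp
    show "eventually (\<lambda>n. real (2 * ?k n + 1) / real n \<le> real (2 * ?k n + 1) / real ((?k n)^2)) sequentially"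
      using ev1 by eventually_elim (use isqrt_bounds isqrt_pos in \<open>auto intro!: divide_left_mono mult_pos_pos simp del: of_nat_power\<close>)
  qed
  define lo where "lo n = F ((?k n)^2) / real ((?k n)^2) * (real ((?k n)^2) / real n) - c * (real (2 * ?k n + 1) / real n)" for n
  define hi where "hi n = F ((?k n + 1)^2) / real ((?k n + 1)^2) * (real ((?k n + 1)^2) / real n) + c * (real (2 * ?k n + 1) / real n)" for n
  have lo_lim: "lo \<longlonglongrightarrow> L" unfolding lo_def using tendsto_diff[OF tendsto_mult[OF u h1] tendsto_mult[OF tendsto_const h3]] by simp
  have hi_lim: "hi \<longlonglongrightarrow> L" unfolding hi_def using tendsto_add[OF tendsto_mult[OF v h2] tendsto_mult[OF tendsto_const h3]] by simp
  show ?thesis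
  proof (rule tendsto_sandwich[OF _ _ lo_lim hi_lim])
    show "eventually (\<lambda>n. lo n \<le> F n / real n) sequentially"
      using ev1
    proof eventually_elim
      case (elim n)
      define k where "k = ?k n"
      have k1: "k \<ge> 1" using isqrt_ge1[OF elim] by (simp add: k_def)
      have b1: "k^2 \<le> n" "n < (k+1)^2" using isqrt_bounds[of n] by (simp_all add: k_def)
      have "F (k^2) - c * real (n - k^2) \<le> F (k^2 + (n - k^2))" by (rule sup)
      also have "k^2 + (n - k^2) = n" using b1 by simp
      finally have A: "F (k^2) - c * real (n - k^2) \<le> F n" .
      have "n - k^2 \<le> 2*k+1" using b1 by (simp add: power2_eq_square algebra_simps)
      then have "real (n - k^2) \<le> real (2*k+1)" by (simp only: of_nat_le_iff)
      then have "c * real (n - k^2) \<le> c * real (2*k+1)" using c by (rule mult_left_mono)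
      with A have B: "F (k^2) - c * real (2*k+1) \<le> F n" by linarith
      have "lo n = (F (k^2) - c * real (2*k+1)) / real n"
        unfolding lo_def k_def[symmetric] using k1 elim by (simp add: field_simps)
      also have "\<dots> \<le> F n / real n" using B by (intro divide_right_mono) auto
      finally show ?case .
    qed
    show "eventually (\<lambda>n. F n / real n \<le> hi n) sequentially"
      using ev1
    proof eventually_elim
      case (elim n)
      define k where "k = ?k n"
      have k1: "k \<ge> 1" using isqrt_ge1[OF elim] by (simp add: k_def)
      have b1: "k^2 \<le> n" "n < (k+1)^2" using isqrt_bounds[of n] by (simp_all add: k_def)
      have "F n - c * real ((k+1)^2 - n) \<le> F (n + ((k+1)^2 - n))" by (rule sup)
      also have "n + ((k+1)^2 - n) = (k+1)^2" using b1 by simp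
      finally have A: "F n - c * real ((k+1)^2 - n) \<le> F ((k+1)^2)" .
      have "(k+1)^2 - n \<le> 2*k+1" using b1 by (simp add: power2_eq_square algebra_simps)
      then have "real ((k+1)^2 - n) \<le> real (2*k+1)" by (simp only: of_nat_le_iff)
      then have "c * real ((k+1)^2 - n) \<le> c * real (2*k+1)" using c by (rule mult_left_mono)
      with A have B: "F n \<le> F ((k+1)^2) + c * real (2*k+1)" by linarith
      have "F n / real n \<le> (F ((k+1)^2) + c * real (2*k+1)) / real n" using B by (intro divide_right_mono) auto
      also have "\<dots> = hi n"
        unfolding hi_def k_def[symmetric] using k1 elim by (simp add: field_simps)
      finally show ?case .
    qed
  qed
qed


context lcs_setting begin

definition Lam :: "('a option \<Rightarrow> 'a option \<Rightarrow> real) \<Rightarrow> real" where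
  "Lam R = (SUP n\<in>{1..}. Ex R n / real n)"

lemma Ex_lim: "(\<lambda>n. Ex R n / real n) \<longlonglongrightarrow> Lam R"
proof -
  obtain C where C: "\<And>u v. \<bar>R u v\<bar> \<le> C" using R_bounded by blast
  show ?thesis unfolding Lam_def
  proof (rule fekete)
    show "Ex R m + Ex R n \<le> Ex R (m + n)" for m n by (rule Ex_superadd)
    show "\<bar>Ex R n\<bar> \<le> (3 * C) * real n" for n using Ex_bound[OF C, where n=n] by (simp add: algebra_simps)
  qed
qed

lemma chebyshev_step:
  assumes C: "\<And>u v. \<bar>R u v\<bar> \<le> C" and e: "e > 0"
  shows "prob {\<omega>\<in>space M. e * real ((Suc j)^2) \<le> \<bar>opt_score R ((Suc j)^2) (\<lambda>i. X i \<omega>) (\<lambda>i. Y i \<omega>) - Ex R ((Suc j)^2)\<bar>}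
     \<le> (64 * C^2 / e^2) * inverse (real (Suc j) ^ 2)"
proof -
  define n where "n = (Suc j)^2"
  define f where "f \<omega> = opt_score R n (\<lambda>i. X i \<omega>) (\<lambda>i. Y i \<omega>)" for \<omega>
  have n1: "n \<ge> 1" unfolding n_def by simp
  have fm[measurable]: "f \<in> borel_measurable M" unfolding f_def by (rule Fn_facts(1))
  have Ef: "expectation f = Ex R n" unfolding f_def by (rule Fn_facts(3))
  have a: "e * real n > 0" using e n1 by simp
  have "prob {\<omega>\<in>space M. \<bar>f \<omega> - expectation f\<bar> \<ge> e * real n} \<le> variance f / (e * real n)^2"
    by (intro Chebyshev_inequality fm a) (unfold f_def, rule Fn2_int)
  also have "variance f \<le> real (2 * (n+1)) * (4*C)^2"
    unfolding Ef f_def by (rule Fn_var[OF C])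
  then have "variance f / (e * real n)^2 \<le> real (2 * (n+1)) * (4*C)^2 / (e * real n)^2"
    by (intro divide_right_mono) auto
  also have "\<dots> \<le> real (4 * n) * (4*C)^2 / (e * real n)^2"
    using n1 by (intro divide_right_mono mult_right_mono) auto
  also have "\<dots> = (64 * C^2 / e^2) * inverse (real n)"
    using n1 e by (simp add: field_simps power2_eq_square)
  also have "real n = real (Suc j) ^ 2" unfolding n_def by simp
  finally show ?thesis using Ef unfolding n_def f_def by simp
qed

lemma as_conv_sq:
  "AE \<omega> in M. (\<lambda>j. opt_score R ((Suc j)^2) (\<lambda>i. X i \<omega>) (\<lambda>i. Y i \<omega>) / real ((Suc j)^2)) \<longlonglongrightarrow> Lam R"
proof -
  obtain C where C: "\<And>u v. \<bar>R u v\<bar> \<le> C" using R_bounded by blast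
  define F where "F j \<omega> = opt_score R ((Suc j)^2) (\<lambda>i. X i \<omega>) (\<lambda>i. Y i \<omega>)" for j \<omega>
  define E where "E j = Ex R ((Suc j)^2)" for j
  have Fm[measurable]: "F j \<in> borel_measurable M" for j unfolding F_def by (rule Fn_facts(1))
  have step: "AE \<omega> in M. eventually (\<lambda>j. \<bar>F j \<omega> - E j\<bar> < inverse (real (Suc k)) * real ((Suc j)^2)) sequentially" for k
  proof -
    define e where "e = inverse (real (Suc k))"
    have e: "e > 0" unfolding e_def by simp
    define A where "A j = {\<omega>\<in>space M. e * real ((Suc j)^2) \<le> \<bar>F j \<omega> - E j\<bar>}" for j
    have Am: "A j \<in> sets M" for j unfolding A_def by measurable
    have pA: "measure M (A j) \<le> (64 * C^2 / e^2) * inverse (real (Suc j) ^ 2)" for j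
      unfolding A_def F_def E_def by (rule chebyshev_step[OF C e])
    have s0: "summable (\<lambda>n. inverse (real n ^ 2) :: real)" by (rule inverse_power_summable) simp
    have s1: "summable (\<lambda>j. inverse (real (Suc j) ^ 2) :: real)"
      by (rule iffD2[OF summable_Suc_iff s0])
    have "summable (\<lambda>j. (64 * C^2 / e^2) * inverse (real (Suc j) ^ 2))"
      by (rule summable_mult[OF s1])
    then have "summable (\<lambda>j. measure M (A j))"
      by (rule summable_comparison_test'[where N=0]) (use pA in auto)
    then have "AE \<omega> in M. eventually (\<lambda>j. \<omega> \<in> space M - A j) sequentially"
      by (intro borel_cantelli_AE1 Am) (auto simp: less_top[symmetric])
    then show ?thesis
      by (rule AE_mp) (intro AE_I2 impI, erule eventually_mono, auto simp: A_def e_def)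
  qed
  then have "AE \<omega> in M. \<forall>k. eventually (\<lambda>j. \<bar>F j \<omega> - E j\<bar> < inverse (real (Suc k)) * real ((Suc j)^2)) sequentially"
    by (subst AE_all_countable) auto
  then show ?thesis
  proof (rule AE_mp, intro AE_I2 impI)
    fix \<omega> assume H: "\<forall>k. eventually (\<lambda>j. \<bar>F j \<omega> - E j\<bar> < inverse (real (Suc k)) * real ((Suc j)^2)) sequentially"
    have d0: "(\<lambda>j. F j \<omega> / real ((Suc j)^2) - E j / real ((Suc j)^2)) \<longlonglongrightarrow> 0"
    proof (rule LIMSEQ_I)
      fix r :: real assume r: "r > 0"
      obtain k where k: "inverse (real (Suc k)) < r" using reals_Archimedean[OF r] by blast
      from H[rule_format, of k] obtain no where no: "\<And>j. j \<ge> no \<Longrightarrow> \<bar>F j \<omega> - E j\<bar> < inverse (real (Suc k)) * real ((Suc j)^2)"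
        by (auto simp: eventually_sequentially)
      show "\<exists>no. \<forall>j\<ge>no. norm (F j \<omega> / real ((Suc j)^2) - E j / real ((Suc j)^2) - 0) < r"
      proof (intro exI allI impI)
        fix j assume "j \<ge> no"
        then have "\<bar>F j \<omega> - E j\<bar> < inverse (real (Suc k)) * real ((Suc j)^2)" by (rule no)
        then have "\<bar>F j \<omega> - E j\<bar> / real ((Suc j)^2) < inverse (real (Suc k))"
          by (simp add: divide_less_eq del: of_nat_power)
        then show "norm (F j \<omega> / real ((Suc j)^2) - E j / real ((Suc j)^2) - 0) < r"
          using k by (simp add: diff_divide_distrib[symmetric] abs_divide del: of_nat_power)
      qed
    qed
    have sm: "strict_mono (\<lambda>j::nat. (Suc j)^2)" by (rule strict_monoI) (simp add: power_strict_mono)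
    have "(\<lambda>j. E j / real ((Suc j)^2)) \<longlonglongrightarrow> Lam R"
      unfolding E_def using filterlim_compose[OF Ex_lim filterlim_subseq[OF sm]] by simp
    from tendsto_add[OF d0 this] show "(\<lambda>j. opt_score R ((Suc j)^2) (\<lambda>i. X i \<omega>) (\<lambda>i. Y i \<omega>) / real ((Suc j)^2)) \<longlonglongrightarrow> Lam R"
      by (simp add: F_def)
  qed
qed

lemma as_conv:
  "AE \<omega> in M. (\<lambda>n. opt_score R n (\<lambda>i. X i \<omega>) (\<lambda>i. Y i \<omega>) / real n) \<longlonglongrightarrow> Lam R"
proof -
  obtain C where C: "\<And>u v. \<bar>R u v\<bar> \<le> C" using R_bounded by blast
  have C0: "C \<ge> 0" using C[of None None] by simp
  show ?thesis using as_conv_sq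
  proof (rule AE_mp, intro AE_I2 impI)
    fix \<omega> assume H: "(\<lambda>j. opt_score R ((Suc j)^2) (\<lambda>i. X i \<omega>) (\<lambda>i. Y i \<omega>) / real ((Suc j)^2)) \<longlonglongrightarrow> Lam R"
    show "(\<lambda>n. opt_score R n (\<lambda>i. X i \<omega>) (\<lambda>i. Y i \<omega>) / real n) \<longlonglongrightarrow> Lam R"
    proof (rule interp_lim[OF H _ _])
      show "0 \<le> 3 * C" using C0 by simp
      fix m n
      have "opt_score R m (\<lambda>i. X i \<omega>) (\<lambda>i. Y i \<omega>) + opt_score R n (\<lambda>i. X (i+m) \<omega>) (\<lambda>j. Y (j+m) \<omega>)
          \<le> opt_score R (m+n) (\<lambda>i. X i \<omega>) (\<lambda>i. Y i \<omega>)" by (rule opt_superadd)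
      moreover have "\<bar>opt_score R n (\<lambda>i. X (i+m) \<omega>) (\<lambda>j. Y (j+m) \<omega>)\<bar> \<le> 3 * real n * C" by (rule opt_score_bound[OF C])
      ultimately show "opt_score R m (\<lambda>i. X i \<omega>) (\<lambda>i. Y i \<omega>) - 3 * C * real n \<le> opt_score R (m+n) (\<lambda>i. X i \<omega>) (\<lambda>i. Y i \<omega>)"
        by (simp add: algebra_simps abs_le_iff)
    qed
  qed
qed

end

context lcs_setting begin

lemma AE_ex:
  assumes "AE x in M. P x" shows "\<exists>x. P x"
proof (rule ccontr)
  assume "\<not> (\<exists>x. P x)"
  then have "AE x in M. False" using assms by (auto elim: eventually_mono)
  thus False using AE_False by simp
qed

lemma lcs_const_eq: "lcs_const M X Y R = Lam R"
  unfolding lcs_const_def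
proof (rule the_equality)
  show "AE w in M. (\<lambda>n. opt_score R n (\<lambda>i. X i w) (\<lambda>j. Y j w) / real n) \<longlonglongrightarrow> Lam R"
    by (rule as_conv)
  fix l assume "AE w in M. (\<lambda>n. opt_score R n (\<lambda>i. X i w) (\<lambda>j. Y j w) / real n) \<longlonglongrightarrow> l"
  with as_conv[of R] have "AE w in M. (\<lambda>n. opt_score R n (\<lambda>i. X i w) (\<lambda>j. Y j w) / real n) \<longlonglongrightarrow> l
     \<and> (\<lambda>n. opt_score R n (\<lambda>i. X i w) (\<lambda>j. Y j w) / real n) \<longlonglongrightarrow> Lam R"
    by eventually_elim auto
  then have "AE w in M. l = Lam R" by eventually_elim (use LIMSEQ_unique in blast)
  then show "l = Lam R" using AE_ex by blast
qed

definition hh :: "('a option \<Rightarrow> 'a option \<Rightarrow> real) \<Rightarrow> ('a option \<Rightarrow> 'a option \<Rightarrow> real) \<Rightarrow> real \<Rightarrow> real \<Rightarrow> nat \<Rightarrow> 'w \<Rightarrow> real" where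
  "hh S T a b n \<omega> = opt_score (\<lambda>u v. a * S u v + b * T u v) n (\<lambda>i. X i \<omega>) (\<lambda>j. Y j \<omega>) / real n"

definition LL :: "('a option \<Rightarrow> 'a option \<Rightarrow> real) \<Rightarrow> ('a option \<Rightarrow> 'a option \<Rightarrow> real) \<Rightarrow> real \<Rightarrow> real \<Rightarrow> real" where
  "LL S T a b = Lam (\<lambda>u v. a * S u v + b * T u v)"

lemma pts_bound:
  assumes CS: "\<And>u v. \<bar>S u v\<bar> \<le> CS" and CT: "\<And>u v. \<bar>T u v\<bar> \<le> CT" and n: "n \<ge> 1"
    and z: "z \<in> pts S T n x y"
  shows "\<bar>fst z\<bar> \<le> 3 * CS" "\<bar>snd z\<bar> \<le> 3 * CT"
proof -
  obtain \<nu> where nu: "\<nu> \<in> alignments n" "z = (align_score S n x y \<nu> / real n, align_score T n x y \<nu> / real n)"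
    using z by (auto simp: pts_def)
  have "\<bar>align_score S n x y \<nu>\<bar> \<le> 3 * real n * CS" by (rule align_score_bound[OF CS nu(1)])
  then show "\<bar>fst z\<bar> \<le> 3 * CS" using nu n by (simp add: abs_divide divide_le_eq algebra_simps)
  have "\<bar>align_score T n x y \<nu>\<bar> \<le> 3 * real n * CT" by (rule align_score_bound[OF CT nu(1)])
  then show "\<bar>snd z\<bar> \<le> 3 * CT" using nu n by (simp add: abs_divide divide_le_eq algebra_simps)
qed

lemma hh_lip:
  assumes CS: "\<And>u v. \<bar>S u v\<bar> \<le> CS" and CT: "\<And>u v. \<bar>T u v\<bar> \<le> CT" and n: "n \<ge> 1"
  shows "hh S T a b n \<omega> \<le> hh S T a' b' n \<omega> + 3 * CS * \<bar>a - a'\<bar> + 3 * CT * \<bar>b - b'\<bar>"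
proof -
  obtain z where z: "z \<in> pts S T n (\<lambda>i. X i \<omega>) (\<lambda>j. Y j \<omega>)" "a * fst z + b * snd z = hh S T a b n \<omega>"
    using pts_attain unfolding hh_def by blast
  have le: "a' * fst z + b' * snd z \<le> hh S T a' b' n \<omega>" unfolding hh_def by (rule pts_le[OF z(1)])
  have b1: "\<bar>fst z\<bar> \<le> 3 * CS" "\<bar>snd z\<bar> \<le> 3 * CT" using pts_bound[OF CS CT n z(1)] by auto
  have "(a - a') * fst z \<le> \<bar>a - a'\<bar> * \<bar>fst z\<bar>" by (simp add: abs_mult[symmetric])
  also have "\<dots> \<le> \<bar>a - a'\<bar> * (3 * CS)" by (rule mult_left_mono[OF b1(1)]) simp
  finally have 1: "(a - a') * fst z \<le> \<bar>a - a'\<bar> * (3 * CS)" .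
  have "(b - b') * snd z \<le> \<bar>b - b'\<bar> * \<bar>snd z\<bar>" by (simp add: abs_mult[symmetric])
  also have "\<dots> \<le> \<bar>b - b'\<bar> * (3 * CT)" by (rule mult_left_mono[OF b1(2)]) simp
  finally have 2: "(b - b') * snd z \<le> \<bar>b - b'\<bar> * (3 * CT)" .
  show ?thesis using z(2) le 1 2 by (simp add: algebra_simps)
qed

lemma hh_conv: "AE \<omega> in M. (\<lambda>n. hh S T a b n \<omega>) \<longlonglongrightarrow> LL S T a b"
  unfolding hh_def LL_def by (rule as_conv)

lemma LL_lip:
  assumes CS: "\<And>u v. \<bar>S u v\<bar> \<le> CS" and CT: "\<And>u v. \<bar>T u v\<bar> \<le> CT"
  shows "LL S T a b \<le> LL S T a' b' + 3 * CS * \<bar>a - a'\<bar> + 3 * CT * \<bar>b - b'\<bar>"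
proof -
  have "AE \<omega> in M. (\<lambda>n. hh S T a b n \<omega>) \<longlonglongrightarrow> LL S T a b \<and> (\<lambda>n. hh S T a' b' n \<omega>) \<longlonglongrightarrow> LL S T a' b'"
    using hh_conv[of S T a b] hh_conv[of S T a' b'] by eventually_elim auto
  then obtain \<omega> where w: "(\<lambda>n. hh S T a b n \<omega>) \<longlonglongrightarrow> LL S T a b" "(\<lambda>n. hh S T a' b' n \<omega>) \<longlonglongrightarrow> LL S T a' b'"
    using AE_ex by blast
  show ?thesis
  proof (rule LIMSEQ_le[OF w(1)])
    show "(\<lambda>n. hh S T a' b' n \<omega> + 3 * CS * \<bar>a - a'\<bar> + 3 * CT * \<bar>b - b'\<bar>) \<longlonglongrightarrow> LL S T a' b' + 3 * CS * \<bar>a - a'\<bar> + 3 * CT * \<bar>b - b'\<bar>"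
      by (intro tendsto_intros w(2))
    show "\<exists>N. \<forall>n\<ge>N. hh S T a b n \<omega> \<le> hh S T a' b' n \<omega> + 3 * CS * \<bar>a - a'\<bar> + 3 * CT * \<bar>b - b'\<bar>"
      using hh_lip[OF CS CT] by (intro exI[of _ 1]) auto
  qed
qed

definition good :: "('a option \<Rightarrow> 'a option \<Rightarrow> real) \<Rightarrow> ('a option \<Rightarrow> 'a option \<Rightarrow> real) \<Rightarrow> 'w \<Rightarrow> bool" where
  "good S T \<omega> \<longleftrightarrow> (\<forall>q::rat\<times>rat. (\<lambda>n. hh S T (of_rat (fst q)) (of_rat (snd q)) n \<omega>) \<longlonglongrightarrow> LL S T (of_rat (fst q)) (of_rat (snd q)))"

lemma AE_good: "AE \<omega> in M. good S T \<omega>"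
  unfolding good_def by (subst AE_all_countable) (auto intro: hh_conv)

end

context lcs_setting begin

lemma floor_approx:
  fixes a :: real assumes N: "N \<ge> (1::nat)"
  shows "\<bar>a - real_of_int \<lfloor>a * real N\<rfloor> / real N\<bar> \<le> 1 / real N"
proof -
  have N0: "real N > 0" using N by simp
  have "real_of_int \<lfloor>a * real N\<rfloor> \<le> a * real N" "a * real N < real_of_int \<lfloor>a * real N\<rfloor> + 1" by linarith+
  then have "real_of_int \<lfloor>a * real N\<rfloor> / real N \<le> a" "a < (real_of_int \<lfloor>a * real N\<rfloor> + 1) / real N"
    using N0 by (simp_all add: divide_le_eq less_divide_eq)
  then show ?thesis using N0 by (simp add: abs_le_iff add_divide_distrib)
qed

lemma good_unif:
  assumes CS: "\<And>u v. \<bar>S u v\<bar> \<le> CS" and CT: "\<And>u v. \<bar>T u v\<bar> \<le> CT"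
    and g: "good S T \<omega>" and e: "e > 0"
  shows "eventually (\<lambda>n. \<forall>a b. \<bar>a\<bar> \<le> real \<rho> \<longrightarrow> \<bar>b\<bar> \<le> real \<rho> \<longrightarrow> \<bar>hh S T a b n \<omega> - LL S T a b\<bar> < e) sequentially"
proof -
  define Lp where "Lp = 3 * CS + 3 * CT"
  have CS0: "CS \<ge> 0" using CS[of None None] by simp
  have CT0: "CT \<ge> 0" using CT[of None None] by simp
  have Lp0: "Lp \<ge> 0" unfolding Lp_def using CS0 CT0 by simp
  obtain N :: nat where N: "3 * Lp / e < real N" using reals_Archimedean2 by blast
  have N1: "N \<ge> 1"
  proof -
    have "3 * Lp / e \<ge> 0" using Lp0 e by simp
    thus ?thesis using N by (cases N) auto
  qed
  have N0: "real N > 0" using N1 by simp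
  have LpN: "Lp / real N < e / 3"
  proof -
    have "3 * Lp < e * real N" using N e by (simp add: divide_less_eq mult.commute)
    thus ?thesis using N0 by (simp add: divide_less_eq)
  qed
  define I where "I = {-int (\<rho> * N)..int (\<rho> * N)}"
  define G where "G = (\<lambda>(i,j). (of_int i / of_nat N, of_int j / of_nat N) :: rat \<times> rat) ` (I \<times> I)"
  have finG: "finite G" unfolding G_def I_def by simp
  have evq: "\<forall>q\<in>G. eventually (\<lambda>n. \<bar>hh S T (of_rat (fst q)) (of_rat (snd q)) n \<omega> - LL S T (of_rat (fst q)) (of_rat (snd q))\<bar> < e/3) sequentially"
  proof
    fix q assume "q \<in> G"
    have "(\<lambda>n. hh S T (of_rat (fst q)) (of_rat (snd q)) n \<omega>) \<longlonglongrightarrow> LL S T (of_rat (fst q)) (of_rat (snd q))"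
      using g unfolding good_def by blast
    from tendstoD[OF this, of "e/3"] e
    show "eventually (\<lambda>n. \<bar>hh S T (of_rat (fst q)) (of_rat (snd q)) n \<omega> - LL S T (of_rat (fst q)) (of_rat (snd q))\<bar> < e/3) sequentially"
      by (simp add: dist_real_def)
  qed
  have ev: "eventually (\<lambda>n. n \<ge> 1 \<and> (\<forall>q\<in>G. \<bar>hh S T (of_rat (fst q)) (of_rat (snd q)) n \<omega> - LL S T (of_rat (fst q)) (of_rat (snd q))\<bar> < e/3)) sequentially"
    using eventually_ball_finite[OF finG evq] eventually_ge_at_top[of 1] by eventually_elim auto
  show ?thesis using ev
  proof eventually_elim
    case (elim n)
    show ?case
    proof (intro allI impI)
      fix a b :: real assume ab: "\<bar>a\<bar> \<le> real \<rho>" "\<bar>b\<bar> \<le> real \<rho>"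
      define i where "i = \<lfloor>a * real N\<rfloor>"
      define j where "j = \<lfloor>b * real N\<rfloor>"
      have iI: "i \<in> I"
      proof -
        have "\<bar>a * real N\<bar> \<le> real \<rho> * real N" using ab N0 by (simp add: abs_mult mult_right_mono)
        then have "- real (\<rho> * N) \<le> a * real N" "a * real N \<le> real (\<rho> * N)" by (simp_all add: abs_le_iff)
        then show ?thesis unfolding i_def I_def by (simp add: le_floor_iff floor_le_iff)
      qed
      have jI: "j \<in> I"
      proof -
        have "\<bar>b * real N\<bar> \<le> real \<rho> * real N" using ab N0 by (simp add: abs_mult mult_right_mono)
        then have "- real (\<rho> * N) \<le> b * real N" "b * real N \<le> real (\<rho> * N)" by (simp_all add: abs_le_iff)
        then show ?thesis unfolding j_def I_def by (simp add: le_floor_iff floor_le_iff)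
      qed
      define q :: "rat \<times> rat" where "q = (of_int i / of_nat N, of_int j / of_nat N)"
      have qG: "q \<in> G" unfolding q_def G_def using iI jI by auto
      define a' where "a' = (of_rat (fst q) :: real)"
      define b' where "b' = (of_rat (snd q) :: real)"
      have a'eq: "a' = real_of_int i / real N" unfolding a'_def q_def by (simp add: of_rat_divide)
      have b'eq: "b' = real_of_int j / real N" unfolding b'_def q_def by (simp add: of_rat_divide)
      have da: "\<bar>a - a'\<bar> \<le> 1 / real N" unfolding a'eq i_def by (rule floor_approx[OF N1])
      have db: "\<bar>b - b'\<bar> \<le> 1 / real N" unfolding b'eq j_def by (rule floor_approx[OF N1])
      have bnd: "3 * CS * \<bar>a - a'\<bar> + 3 * CT * \<bar>b - b'\<bar> \<le> Lp / real N"
      proof -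
        have "3 * CS * \<bar>a - a'\<bar> \<le> 3 * CS * (1 / real N)" using da CS0 by (intro mult_left_mono) auto
        moreover have "3 * CT * \<bar>b - b'\<bar> \<le> 3 * CT * (1 / real N)" using db CT0 by (intro mult_left_mono) auto
        ultimately show ?thesis unfolding Lp_def by (simp add: add_divide_distrib)
      qed
      have bnd': "3 * CS * \<bar>a' - a\<bar> + 3 * CT * \<bar>b' - b\<bar> \<le> Lp / real N" using bnd by (simp add: abs_minus_commute)
      have h1: "hh S T a b n \<omega> \<le> hh S T a' b' n \<omega> + Lp / real N" using hh_lip[where S=S and T=T and CS=CS and CT=CT and n=n and a=a and b=b and \<omega>=\<omega> and a'=a' and b'=b', OF CS CT] elim bnd by linarith
      have h2: "hh S T a' b' n \<omega> \<le> hh S T a b n \<omega> + Lp / real N" using hh_lip[where S=S and T=T and CS=CS and CT=CT and n=n and a=a' and b=b' and \<omega>=\<omega> and a'=a and b'=b, OF CS CT] elim bnd' by linarith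
      have l1: "LL S T a b \<le> LL S T a' b' + Lp / real N" using LL_lip[where S=S and T=T and CS=CS and CT=CT and a=a and b=b and a'=a' and b'=b', OF CS CT] bnd by linarith
      have l2: "LL S T a' b' \<le> LL S T a b + Lp / real N" using LL_lip[where S=S and T=T and CS=CS and CT=CT and a=a' and b=b' and a'=a and b'=b, OF CS CT] bnd' by linarith
      have q3: "\<bar>hh S T a' b' n \<omega> - LL S T a' b'\<bar> < e/3" using elim qG unfolding a'_def b'_def by blast
      have q4: "hh S T a' b' n \<omega> - LL S T a' b' < e/3" "LL S T a' b' - hh S T a' b' n \<omega> < e/3"
        using q3 unfolding abs_less_iff by linarith+
      show "\<bar>hh S T a b n \<omega> - LL S T a b\<bar> < e" unfolding abs_less_iff
        by (intro conjI) (use h1 h2 l1 l2 q4 LpN in linarith)+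
    qed
  qed
qed

lemma good_conv:
  assumes CS: "\<And>u v. \<bar>S u v\<bar> \<le> CS" and CT: "\<And>u v. \<bar>T u v\<bar> \<le> CT" and g: "good S T \<omega>"
  shows "(\<lambda>n. hh S T a b n \<omega>) \<longlonglongrightarrow> LL S T a b"
proof (rule LIMSEQ_I)
  fix r :: real assume r: "r > 0"
  obtain \<rho> :: nat where \<rho>: "max \<bar>a\<bar> \<bar>b\<bar> < real \<rho>" using reals_Archimedean2 by blast
  from good_unif[OF CS CT g r, of \<rho>] obtain no where
    "\<And>n. n \<ge> no \<Longrightarrow> \<forall>a b. \<bar>a\<bar> \<le> real \<rho> \<longrightarrow> \<bar>b\<bar> \<le> real \<rho> \<longrightarrow> \<bar>hh S T a b n \<omega> - LL S T a b\<bar> < r"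
    by (auto simp: eventually_sequentially)
  then show "\<exists>no. \<forall>n\<ge>no. norm (hh S T a b n \<omega> - LL S T a b) < r" using \<rho> by force
qed

end

lemma bdd_subseq_R2: "bounded (range (x::nat \<Rightarrow> real \<times> real)) \<Longrightarrow> \<exists>l s. strict_mono s \<and> (x \<circ> s) \<longlonglongrightarrow> l"
  using bounded_imp_convergent_subsequence by blast

context lcs_setting begin

definition KK :: "('a option \<Rightarrow> 'a option \<Rightarrow> real) \<Rightarrow> ('a option \<Rightarrow> 'a option \<Rightarrow> real) \<Rightarrow> (real \<times> real) set" where
  "KK S T = {z. \<forall>a b. a * fst z + b * snd z \<le> LL S T a b}"

definition AA :: "('a option \<Rightarrow> 'a option \<Rightarrow> real) \<Rightarrow> ('a option \<Rightarrow> 'a option \<Rightarrow> real) \<Rightarrow> nat \<Rightarrow> 'w \<Rightarrow> (real \<times> real) set" where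
  "AA S T n \<omega> = score_set S T n (\<lambda>i. X i \<omega>) (\<lambda>j. Y j \<omega>)"

lemma AA_le: "z \<in> AA S T n \<omega> \<Longrightarrow> a * fst z + b * snd z \<le> hh S T a b n \<omega>"
  unfolding AA_def hh_def by (rule score_set_le)

lemma hh_bound:
  assumes CS: "\<And>u v. \<bar>S u v\<bar> \<le> CS" and CT: "\<And>u v. \<bar>T u v\<bar> \<le> CT" and n: "n \<ge> 1"
  shows "\<bar>hh S T a b n \<omega>\<bar> \<le> 3 * (\<bar>a\<bar> * CS + \<bar>b\<bar> * CT)"
proof -
  have R: "\<bar>a * S u v + b * T u v\<bar> \<le> \<bar>a\<bar> * CS + \<bar>b\<bar> * CT" for u v
  proof -
    have "\<bar>a * S u v\<bar> \<le> \<bar>a\<bar> * CS" unfolding abs_mult by (rule mult_left_mono[OF CS]) simp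
    moreover have "\<bar>b * T u v\<bar> \<le> \<bar>b\<bar> * CT" unfolding abs_mult by (rule mult_left_mono[OF CT]) simp
    ultimately show ?thesis by (rule order_trans[OF abs_triangle_ineq add_mono])
  qed
  have "\<bar>opt_score (\<lambda>u v. a * S u v + b * T u v) n (\<lambda>i. X i \<omega>) (\<lambda>j. Y j \<omega>)\<bar> \<le> 3 * real n * (\<bar>a\<bar> * CS + \<bar>b\<bar> * CT)"
    by (rule opt_score_bound[OF R])
  then show ?thesis unfolding hh_def using n by (simp add: abs_divide divide_le_eq algebra_simps)
qed

lemma AA_bound:
  assumes CS: "\<And>u v. \<bar>S u v\<bar> \<le> CS" and CT: "\<And>u v. \<bar>T u v\<bar> \<le> CT" and n: "n \<ge> 1" and z: "z \<in> AA S T n \<omega>"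
  shows "norm z \<le> 3 * CS + 3 * CT"
proof -
  have hb: "\<bar>hh S T a b n \<omega>\<bar> \<le> 3 * (\<bar>a\<bar> * CS + \<bar>b\<bar> * CT)" for a b
    by (rule hh_bound[where S=S and T=T and CS=CS and CT=CT, OF CS CT n])
  have le: "a * fst z + b * snd z \<le> hh S T a b n \<omega>" for a b by (rule AA_le[OF z])
  have "fst z \<le> 3 * CS" using le[of 1 0] hb[of 1 0] by simp
  moreover have "- fst z \<le> 3 * CS" using le[of "-1" 0] hb[of "-1" 0] by simp
  moreover have "snd z \<le> 3 * CT" using le[of 0 1] hb[of 0 1] by simp
  moreover have "- snd z \<le> 3 * CT" using le[of 0 "-1"] hb[of 0 "-1"] by simp
  moreover have "norm z \<le> norm (fst z) + norm (snd z)" using norm_Pair_le[of "fst z" "snd z"] by simp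
  ultimately show ?thesis by simp
qed

lemma KK_closed: "closed (KK S T)"
proof -
  have "KK S T = (\<Inter>ab. {z. (fst ab, snd ab) \<bullet> z \<le> LL S T (fst ab) (snd ab)})"
    unfolding KK_def by (auto simp: inner_pair)
  thus ?thesis by (auto intro!: closed_INT closed_halfspace_le)
qed

lemma KK_convex: "convex (KK S T)"
proof -
  have "KK S T = (\<Inter>ab. {z. (fst ab, snd ab) \<bullet> z \<le> LL S T (fst ab) (snd ab)})"
    unfolding KK_def by (auto simp: inner_pair)
  thus ?thesis by (auto intro!: convex_INT convex_halfspace_le)
qed

lemma KK_bounded: "bounded (KK S T)"
proof -
  define B where "B = \<bar>LL S T 1 0\<bar> + \<bar>LL S T (-1) 0\<bar> + \<bar>LL S T 0 1\<bar> + \<bar>LL S T 0 (-1)\<bar>"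
  have "norm z \<le> B" if z: "z \<in> KK S T" for z
  proof -
    have H: "a * fst z + b * snd z \<le> LL S T a b" for a b using z unfolding KK_def by blast
    have "fst z \<le> LL S T 1 0" "- fst z \<le> LL S T (-1) 0" "snd z \<le> LL S T 0 1" "- snd z \<le> LL S T 0 (-1)"
      using H[of 1 0] H[of "-1" 0] H[of 0 1] H[of 0 "-1"] by simp_all
    moreover have "norm z \<le> norm (fst z) + norm (snd z)" using norm_Pair_le[of "fst z" "snd z"] by simp
    ultimately show ?thesis unfolding B_def by simp
  qed
  thus ?thesis unfolding bounded_iff by blast
qed

lemma KK_compact: "compact (KK S T)"
  using KK_closed KK_bounded by (simp add: compact_eq_bounded_closed)

lemma limit_in_KK:
  fixes x :: "nat \<Rightarrow> real \<times> real" and r :: "nat \<Rightarrow> nat"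
  assumes CS: "\<And>u v. \<bar>S u v\<bar> \<le> CS" and CT: "\<And>u v. \<bar>T u v\<bar> \<le> CT" and g: "good S T \<omega>"
    and r: "strict_mono r" and x: "\<And>k. x k \<in> AA S T (r k) \<omega>" and lim: "x \<longlonglongrightarrow> l"
  shows "l \<in> KK S T"
  unfolding KK_def
proof (intro CollectI allI)
  fix a b :: real
  show "a * fst l + b * snd l \<le> LL S T a b"
  proof (rule LIMSEQ_le[of "\<lambda>k. a * fst (x k) + b * snd (x k)" _ "\<lambda>k. hh S T a b (r k) \<omega>"])
    show "(\<lambda>k. a * fst (x k) + b * snd (x k)) \<longlonglongrightarrow> a * fst l + b * snd l"
      by (intro tendsto_intros lim)
    have "(\<lambda>n. hh S T a b n \<omega>) \<longlonglongrightarrow> LL S T a b" by (rule good_conv[where S=S and T=T and CS=CS and CT=CT, OF CS CT g])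
    from LIMSEQ_subseq_LIMSEQ[OF this r] show "(\<lambda>k. hh S T a b (r k) \<omega>) \<longlonglongrightarrow> LL S T a b" by (simp add: comp_def)
    show "\<exists>N. \<forall>n\<ge>N. a * fst (x n) + b * snd (x n) \<le> hh S T a b (r n) \<omega>" using AA_le[OF x] by blast
  qed
qed

lemma conv_subseq:
  fixes x :: "nat \<Rightarrow> real \<times> real" and r :: "nat \<Rightarrow> nat"
  assumes CS: "\<And>u v. \<bar>S u v\<bar> \<le> CS" and CT: "\<And>u v. \<bar>T u v\<bar> \<le> CT"
    and r1: "\<And>k. r k \<ge> 1" and x: "\<And>k. x k \<in> AA S T (r k) \<omega>"
  shows "\<exists>l (s::nat\<Rightarrow>nat). strict_mono s \<and> (x \<circ> s) \<longlonglongrightarrow> l"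
proof -
  have "bounded (range x)" unfolding bounded_iff using AA_bound[where S=S and T=T and CS=CS and CT=CT, OF CS CT r1 x] by blast
  thus ?thesis by (rule bdd_subseq_R2)
qed

lemma KK_nonempty:
  assumes CS: "\<And>u v. \<bar>S u v\<bar> \<le> CS" and CT: "\<And>u v. \<bar>T u v\<bar> \<le> CT" and g: "good S T \<omega>"
  shows "KK S T \<noteq> {}"
proof -
  define x where "x k = (SOME z. z \<in> AA S T (Suc k) \<omega>)" for k
  have x: "x k \<in> AA S T (Suc k) \<omega>" for k
    unfolding x_def AA_def using score_set_ne by (metis some_in_eq)
  obtain l s where s: "strict_mono s" "(x \<circ> s) \<longlonglongrightarrow> l"
    using conv_subseq[where S=S and T=T and CS=CS and CT=CT and r=Suc and x=x and \<omega>=\<omega>, OF CS CT] x by auto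
  have "strict_mono (Suc \<circ> s)" using s(1) by (simp add: strict_mono_def)
  then have "l \<in> KK S T" using limit_in_KK[where S=S and T=T and CS=CS and CT=CT and r="Suc \<circ> s" and x="x \<circ> s", OF CS CT g _ _ s(2)] x by simp
  thus ?thesis by blast
qed

lemma part_i:
  assumes CS: "\<And>u v. \<bar>S u v\<bar> \<le> CS" and CT: "\<And>u v. \<bar>T u v\<bar> \<le> CT" and g: "good S T \<omega>" and e: "e > 0"
  shows "eventually (\<lambda>n. \<forall>x\<in>AA S T n \<omega>. infdist x (KK S T) < e) sequentially"
proof (rule ccontr)
  assume A: "\<not> ?thesis"
  have "\<not> eventually (\<lambda>n. n \<ge> 1 \<longrightarrow> (\<forall>x\<in>AA S T n \<omega>. infdist x (KK S T) < e)) sequentially"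
  proof
    assume B: "eventually (\<lambda>n. n \<ge> 1 \<longrightarrow> (\<forall>x\<in>AA S T n \<omega>. infdist x (KK S T) < e)) sequentially"
    have "eventually (\<lambda>n. \<forall>x\<in>AA S T n \<omega>. infdist x (KK S T) < e) sequentially"
      using B eventually_ge_at_top[of 1] by eventually_elim auto
    with A show False by simp
  qed
  from not_eventually_sequentiallyD[OF this] obtain r :: "nat \<Rightarrow> nat" where r0: "strict_mono r"
    "\<forall>k. \<not> (r k \<ge> 1 \<longrightarrow> (\<forall>x\<in>AA S T (r k) \<omega>. infdist x (KK S T) < e))" by blast
  then have r: "strict_mono r" "\<And>k. r k \<ge> 1 \<and> \<not> (\<forall>x\<in>AA S T (r k) \<omega>. infdist x (KK S T) < e)" by auto
  have "\<forall>k. \<exists>x. x \<in> AA S T (r k) \<omega> \<and> infdist x (KK S T) \<ge> e"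
  proof
    fix k from r(2)[of k] show "\<exists>x. x \<in> AA S T (r k) \<omega> \<and> infdist x (KK S T) \<ge> e" by (auto simp: not_less)
  qed
  from choice[OF this] obtain x :: "nat \<Rightarrow> real \<times> real" where
    xx: "\<forall>k. x k \<in> AA S T (r k) \<omega> \<and> infdist (x k) (KK S T) \<ge> e" by blast
  then have x: "\<And>k. x k \<in> AA S T (r k) \<omega>" "\<And>k. infdist (x k) (KK S T) \<ge> e" by blast+
  obtain l s where s: "strict_mono s" "(x \<circ> s) \<longlonglongrightarrow> l"
    using conv_subseq[where S=S and T=T and CS=CS and CT=CT and r=r and x=x and \<omega>=\<omega>, OF CS CT] r x by auto
  have rs: "strict_mono (r \<circ> s)" using r(1) s(1) by (rule strict_mono_o)
  have xs: "(x \<circ> s) k \<in> AA S T ((r \<circ> s) k) \<omega>" for k using x(1) by simp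
  have lK: "l \<in> KK S T" by (rule limit_in_KK[where S=S and T=T and CS=CS and CT=CT, OF CS CT g rs xs s(2)])
  have "(\<lambda>k. dist ((x \<circ> s) k) l) \<longlonglongrightarrow> 0" using s(2) by (rule tendsto_dist_iff[THEN iffD1])
  from LIMSEQ_D[OF this e] obtain no where "\<forall>n\<ge>no. norm (dist ((x \<circ> s) n) l - 0) < e" by blast
  then obtain k where "dist ((x \<circ> s) k) l < e" by auto
  moreover have "infdist ((x \<circ> s) k) (KK S T) \<le> dist ((x \<circ> s) k) l" by (rule infdist_le[OF lK])
  moreover have "infdist ((x \<circ> s) k) (KK S T) \<ge> e" using x(2) by simp
  ultimately show False by linarith
qed

end

context lcs_setting begin

lemma AA_compact: "compact (AA S T n \<omega>)" and AA_convex: "convex (AA S T n \<omega>)" and AA_ne: "AA S T n \<omega> \<noteq> {}"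
  unfolding AA_def by (rule score_set_compact score_set_convex score_set_ne)+

lemma part_ii:
  assumes CS: "\<And>u v. \<bar>S u v\<bar> \<le> CS" and CT: "\<And>u v. \<bar>T u v\<bar> \<le> CT" and g: "good S T \<omega>" and e: "e > 0"
  shows "eventually (\<lambda>n. \<forall>y\<in>KK S T. infdist y (AA S T n \<omega>) < e) sequentially"
proof -
  have U: "eventually (\<lambda>n. \<forall>a b. \<bar>a\<bar> \<le> real 1 \<longrightarrow> \<bar>b\<bar> \<le> real 1 \<longrightarrow> \<bar>hh S T a b n \<omega> - LL S T a b\<bar> < e) sequentially"
    by (rule good_unif[where S=S and T=T and CS=CS and CT=CT, OF CS CT g e])
  show ?thesis using U
  proof eventually_elim
    case (elim n)
    show ?case
    proof (rule ballI, rule ccontr)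
      fix y assume yK: "y \<in> KK S T" and nlt: "\<not> infdist y (AA S T n \<omega>) < e"
      let ?A = "AA S T n \<omega>"
      have clA: "closed ?A" using AA_compact by (rule compact_imp_closed)
      obtain z where z: "z \<in> ?A" "infdist y ?A = dist y z" using infdist_attains_inf[OF clA AA_ne] by blast
      have mn: "\<forall>w\<in>?A. dist y z \<le> dist y w"
      proof
        fix w assume "w \<in> ?A"
        from infdist_le[OF this, of y] z(2) show "dist y z \<le> dist y w" by simp
      qed
      have dot: "(y - z) \<bullet> (w - z) \<le> 0" if "w \<in> ?A" for w
        by (rule any_closest_point_dot[OF AA_convex clA z(1) that mn])
      define v where "v = y - z"
      define d where "d = norm v"
      have de: "d \<ge> e" using nlt z(2) unfolding d_def v_def by (simp add: dist_norm)
      have d0: "d > 0" using de e by simp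
      define a where "a = fst v / d"
      define b where "b = snd v / d"
      have ab: "(a, b) = (1/d) *\<^sub>R v" unfolding a_def b_def by (simp add: prod_eq_iff)
      have na: "\<bar>a\<bar> \<le> 1"
      proof -
        have "\<bar>fst v\<bar> \<le> norm v" using norm_fst_le[of "fst v" "snd v"] by simp
        thus ?thesis unfolding a_def d_def using d0 d_def by (simp add: abs_divide divide_le_eq)
      qed
      have nb: "\<bar>b\<bar> \<le> 1"
      proof -
        have "\<bar>snd v\<bar> \<le> norm v" using norm_snd_le[of "snd v" "fst v"] by simp
        thus ?thesis unfolding b_def d_def using d0 d_def by (simp add: abs_divide divide_le_eq)
      qed
      have cl: "\<bar>hh S T a b n \<omega> - LL S T a b\<bar> < e" using elim na nb by simp
      obtain w where w: "w \<in> pts S T n (\<lambda>i. X i \<omega>) (\<lambda>j. Y j \<omega>)" "a * fst w + b * snd w = hh S T a b n \<omega>"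
        using pts_attain unfolding hh_def by blast
      have wA: "w \<in> ?A" using w(1) pts_sub unfolding AA_def by blast
      have "v \<bullet> w \<le> v \<bullet> z" using dot[OF wA] unfolding v_def by (simp add: inner_diff_right)
      moreover have "v \<bullet> z = v \<bullet> y - d^2" unfolding d_def v_def
        by (simp add: inner_diff_right power2_norm_eq_inner)
      ultimately have vw: "v \<bullet> w \<le> v \<bullet> y - d^2" by simp
      have hw: "hh S T a b n \<omega> = (v \<bullet> w) / d"
        unfolding w(2)[symmetric] inner_pair[symmetric] ab by simp
      have hy: "a * fst y + b * snd y = (v \<bullet> y) / d"
        unfolding inner_pair[symmetric] ab by simp
      have "hh S T a b n \<omega> \<le> (v \<bullet> y - d^2) / d" unfolding hw using vw d0 by (simp add: divide_right_mono)
      also have "\<dots> = (v \<bullet> y) / d - d" using d0 by (simp add: power2_eq_square diff_divide_distrib)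
      also have "(v \<bullet> y) / d \<le> LL S T a b" using yK unfolding KK_def hy[symmetric] by blast
      finally have "hh S T a b n \<omega> \<le> LL S T a b - d" by simp
      then show False using cl de by linarith
    qed
  qed
qed

lemma haus_conv:
  assumes CS: "\<And>u v. \<bar>S u v\<bar> \<le> CS" and CT: "\<And>u v. \<bar>T u v\<bar> \<le> CT" and g: "good S T \<omega>"
  shows "(\<lambda>n. hausdist (AA S T n \<omega>) (KK S T)) \<longlonglongrightarrow> 0"
proof (rule LIMSEQ_I)
  fix r :: real assume r: "r > 0"
  have r2: "r/2 > 0" using r by simp
  have ev: "eventually (\<lambda>n. (\<forall>x\<in>AA S T n \<omega>. infdist x (KK S T) < r/2) \<and> (\<forall>y\<in>KK S T. infdist y (AA S T n \<omega>) < r/2)) sequentially"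
    using part_i[where S=S and T=T and CS=CS and CT=CT, OF CS CT g r2] part_ii[where S=S and T=T and CS=CS and CT=CT, OF CS CT g r2]
    by eventually_elim auto
  then obtain no where no: "\<And>n. n \<ge> no \<Longrightarrow> (\<forall>x\<in>AA S T n \<omega>. infdist x (KK S T) < r/2) \<and> (\<forall>y\<in>KK S T. infdist y (AA S T n \<omega>) < r/2)"
    by (auto simp: eventually_sequentially)
  have Kne: "KK S T \<noteq> {}" by (rule KK_nonempty[where S=S and T=T and CS=CS and CT=CT, OF CS CT g])
  show "\<exists>no. \<forall>n\<ge>no. norm (hausdist (AA S T n \<omega>) (KK S T) - 0) < r"
  proof (intro exI allI impI)
    fix n assume "n \<ge> no"
    note H = no[OF this]
    let ?A = "AA S T n \<omega>" and ?K = "KK S T"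
    have b1: "bdd_above ((\<lambda>x. infdist x ?K) ` ?A)" using H by (intro bdd_aboveI[where M="r/2"]) auto
    have b2: "bdd_above ((\<lambda>y. infdist y ?A) ` ?K)" using H by (intro bdd_aboveI[where M="r/2"]) auto
    have s1: "(SUP x\<in>?A. infdist x ?K) \<le> r/2" using H AA_ne by (intro cSUP_least) (auto intro: less_imp_le)
    have s2: "(SUP y\<in>?K. infdist y ?A) \<le> r/2" using H Kne by (intro cSUP_least) (auto intro: less_imp_le)
    obtain x0 where x0: "x0 \<in> ?A" using AA_ne by blast
    have t1: "0 \<le> (SUP x\<in>?A. infdist x ?K)"
      using cSUP_upper[OF x0 b1] infdist_nonneg[of x0 ?K] by linarith
    have "hausdist ?A ?K \<le> r/2" "0 \<le> hausdist ?A ?K" unfolding hausdist_def using s1 s2 t1 by auto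
    then show "norm (hausdist ?A ?K - 0) < r" using r by simp
  qed
qed

end

theorem mainTheorem8:
  fixes M :: "'w measure" and p :: "'a::finite pmf"
    and X Y :: "nat \<Rightarrow> 'w \<Rightarrow> 'a"
    and S T :: "'a option \<Rightarrow> 'a option \<Rightarrow> real"
  assumes "prob_space M"
    and "prob_space.indep_vars M (\<lambda>_. count_space UNIV)
           (\<lambda>k. case k of Inl i \<Rightarrow> X i | Inr j \<Rightarrow> Y j) UNIV"
    and "\<And>i. distr M (count_space UNIV) (X i) = measure_pmf p"
    and "\<And>j. distr M (count_space UNIV) (Y j) = measure_pmf p"
    and "symmetric_scoring S" and "symmetric_scoring T"
  shows "\<exists>K :: (real \<times> real) set. K \<noteq> {} \<and> compact K \<and> convex K
     \<and> (AE w in M. (\<lambda>n. hausdist (score_set S T n (\<lambda>i. X i w) (\<lambda>j. Y j w)) K) \<longlonglongrightarrow> 0)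
     \<and> (\<forall>a b :: real.
          (\<forall>n\<ge>1. \<forall>w\<in>space M.
             (SUP z\<in>score_set S T n (\<lambda>i. X i w) (\<lambda>j. Y j w). a * fst z + b * snd z)
               = opt_score (\<lambda>u v. a * S u v + b * T u v) n (\<lambda>i. X i w) (\<lambda>j. Y j w) / real n)
        \<and> (AE w in M. (\<lambda>n. opt_score (\<lambda>u v. a * S u v + b * T u v) n (\<lambda>i. X i w) (\<lambda>j. Y j w) / real n)
             \<longlonglongrightarrow> lcs_const M X Y (\<lambda>u v. a * S u v + b * T u v)))"
proof -
  interpret L: lcs_setting M p X Y
    by (rule lcs_setting.intro[OF assms(1)], rule lcs_setting_axioms.intro) (use assms in auto)
  obtain CS where CS: "\<And>u v. \<bar>S u v\<bar> \<le> CS" using R_bounded by blast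
  obtain CT where CT: "\<And>u v. \<bar>T u v\<bar> \<le> CT" using R_bounded by blast
  obtain \<omega>0 where g0: "L.good S T \<omega>0" using L.AE_ex[OF L.AE_good] by blast
  show ?thesis
  proof (intro exI[of _ "L.KK S T"] conjI allI ballI impI)
    show "L.KK S T \<noteq> {}" by (rule L.KK_nonempty[where S=S and T=T and CS=CS and CT=CT, OF CS CT g0])
    show "compact (L.KK S T)" by (rule L.KK_compact)
    show "convex (L.KK S T)" by (rule L.KK_convex)
    show "AE w in M. (\<lambda>n. hausdist (score_set S T n (\<lambda>i. X i w) (\<lambda>j. Y j w)) (L.KK S T)) \<longlonglongrightarrow> 0"
      using L.AE_good[of S T]
    proof eventually_elim
      case (elim w)
      show ?case using L.haus_conv[where S=S and T=T and CS=CS and CT=CT, OF CS CT elim] unfolding L.AA_def .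
    qed
    fix a b :: real
    show "(SUP z\<in>score_set S T n (\<lambda>i. X i w) (\<lambda>j. Y j w). a * fst z + b * snd z)
               = opt_score (\<lambda>u v. a * S u v + b * T u v) n (\<lambda>i. X i w) (\<lambda>j. Y j w) / real n" for n w
      by (rule score_set_SUP)
    show "AE w in M. (\<lambda>n. opt_score (\<lambda>u v. a * S u v + b * T u v) n (\<lambda>i. X i w) (\<lambda>j. Y j w) / real n)
             \<longlonglongrightarrow> lcs_const M X Y (\<lambda>u v. a * S u v + b * T u v)"
      unfolding L.lcs_const_eq by (rule L.as_conv)
  qed
qed


end
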